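(* Let $J_1,J_2$ satisfy (J), let $a,b,e>0$, let $G$ satisfy (G1), and let $0<L_1<L_2<+\infty$. For $d_1,d_2>0$ let $\lambda_p(d_1,d_2)$ be the principal eigenvalue defined in the context. Then: (i) $\lambda_p(d_1,d_2)$ is continuous in $(d_1,d_2)$ and strictly increasing in the sense that $\lambda_p(d_1,d_2)>\lambda_p(d_1',d_2')$ whenever $d_i>d_i'$ for $i=1,2$; (ii) $\lim_{(d_1,d_2)\to(0,0)}\lambda_p(d_1,d_2)=\frac12\Big(\frac ae+\frac{b}{G'(0)}-\sqrt{\big(\frac ae-\frac{b}{G'(0)}\big)^2+4}\Big)$; (iii) $\lim_{(d_1,d_2)\to(\infty,\infty)}\lambda_p(d_1,d_2)=+\infty$.
   Context: Condition (J) on $J_i$ ($i=1,2$): $J_i\in C(\mathbb{R})\cap L^\infty(\mathbb{R})$, $J_i(x)=J_i(-x)\ge 0$, $J_i(0)>0$, $\int_{\mathbb{R}}J_i=1$. (G1): $G\in C^1([0,\infty))$, $G(0)=0$, $G'(z)>0$ for $z\ge0$. For $\phi=(\phi_1,\phi_2)$ with $\phi_i\in C([L_1,L_2])$ define $\mathcal K[\phi]=(\mathcal K_1,\mathcal K_2)$ by $\mathcal K_1=\frac{d_1}{e}\int_{L_1}^{L_2}J_1(x-y)\phi_1(y)dy-\frac{d_1}{e}\phi_1-\frac ae\phi_1+\phi_2$ and $\mathcal K_2=\frac{d_2}{G'(0)}\int_{L_1}^{L_2}J_2(x-y)\phi_2(y)dy-\frac{d_2}{G'(0)}\phi_2+\phi_1-\frac{b}{G'(0)}\phi_2$.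 The principal eigenvalue is $\lambda_p(d_1,d_2):=\sup\{\lambda\in\mathbb R:\exists\phi\in C([L_1,L_2])^2$ with $\phi_1,\phi_2>0$ on $[L_1,L_2]$ and $\mathcal K[\phi]+\lambda\phi\le0$ componentwise on $[L_1,L_2]\}$; it also equals $-\sup\{\langle\mathcal K\phi,\phi\rangle_{L^2\times L^2}:\|\phi\|_{L^2\times L^2}=1\}$. *)

theory Defs
  imports "HOL-Analysis.Analysis"
begin

definition kernel_J :: "(real \<Rightarrow> real) \<Rightarrow> bool" where
  "kernel_J J \<longleftrightarrow> continuous_on UNIV J \<and> bounded (range J)
     \<and> (\<forall>x. J x = J (- x) \<and> J x \<ge> 0) \<and> J 0 > 0 \<and> (J has_integral 1) UNIV"

definition cond_G1 :: "(real \<Rightarrow> real) \<Rightarrow> (real \<Rightarrow> real) \<Rightarrow> bool" where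
  "cond_G1 G Gd \<longleftrightarrow> continuous_on {0..} Gd
     \<and> (\<forall>z\<ge>0. (G has_real_derivative Gd z) (at z within {0..}))
     \<and> G 0 = 0 \<and> (\<forall>z\<ge>0. Gd z > 0)"

text \<open>The components of the operator K[phi]; g0 stands for G'(0).\<close>
definition K1op :: "(real \<Rightarrow> real) \<Rightarrow> real \<Rightarrow> real \<Rightarrow> real \<Rightarrow> real \<Rightarrow> real
    \<Rightarrow> (real \<Rightarrow> real) \<Rightarrow> (real \<Rightarrow> real) \<Rightarrow> real \<Rightarrow> real" where
  "K1op J1 a e L1 L2 d1 \<phi>1 \<phi>2 x =
     d1 / e * integral {L1..L2} (\<lambda>y. J1 (x - y) * \<phi>1 y) - d1 / e * \<phi>1 x - a / e * \<phi>1 x + \<phi>2 x"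

definition K2op :: "(real \<Rightarrow> real) \<Rightarrow> real \<Rightarrow> real \<Rightarrow> real \<Rightarrow> real \<Rightarrow> real
    \<Rightarrow> (real \<Rightarrow> real) \<Rightarrow> (real \<Rightarrow> real) \<Rightarrow> real \<Rightarrow> real" where
  "K2op J2 b g0 L1 L2 d2 \<phi>1 \<phi>2 x =
     d2 / g0 * integral {L1..L2} (\<lambda>y. J2 (x - y) * \<phi>2 y) - d2 / g0 * \<phi>2 x + \<phi>1 x - b / g0 * \<phi>2 x"

definition lambda_p :: "(real \<Rightarrow> real) \<Rightarrow> (real \<Rightarrow> real) \<Rightarrow> real \<Rightarrow> real \<Rightarrow> real \<Rightarrow> real
    \<Rightarrow> real \<Rightarrow> real \<Rightarrow> real \<Rightarrow> real \<Rightarrow> real" where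
  "lambda_p J1 J2 a b e g0 L1 L2 d1 d2 = Sup {lam. \<exists>\<phi>1 \<phi>2.
      continuous_on {L1..L2} \<phi>1 \<and> continuous_on {L1..L2} \<phi>2 \<and>
      (\<forall>x\<in>{L1..L2}. \<phi>1 x > 0 \<and> \<phi>2 x > 0
         \<and> K1op J1 a e L1 L2 d1 \<phi>1 \<phi>2 x + lam * \<phi>1 x \<le> 0
         \<and> K2op J2 b g0 L1 L2 d2 \<phi>1 \<phi>2 x + lam * \<phi>2 x \<le> 0)}"

end

theory Submission
  imports Defs
begin


definition Aop :: "(real\<Rightarrow>real) \<Rightarrow> real \<Rightarrow> real \<Rightarrow> (real\<Rightarrow>real) \<Rightarrow> real \<Rightarrow> real" where
  "Aop J L1 L2 \<phi> x = integral {L1..L2} (\<lambda>y. J (x - y) * \<phi> y)"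

primrec Apow :: "(real\<Rightarrow>real) \<Rightarrow> real \<Rightarrow> real \<Rightarrow> nat \<Rightarrow> real \<Rightarrow> real" where
  "Apow J L1 L2 0 = (\<lambda>_. 1)"
| "Apow J L1 L2 (Suc k) = Aop J L1 L2 (Apow J L1 L2 k)"

locale kern =
  fixes J :: "real \<Rightarrow> real" and L1 L2 :: real
  assumes kJ: "kernel_J J" and L12: "L1 < L2"
begin

lemma J_nonneg: "J x \<ge> 0" using kJ unfolding kernel_J_def by auto
lemma J_sym: "J (-x) = J x" using kJ unfolding kernel_J_def by metis
lemma J_cont: "continuous_on UNIV J" using kJ unfolding kernel_J_def by auto
lemma J_int: "(J has_integral 1) UNIV" using kJ unfolding kernel_J_def by auto
lemma J0: "J 0 > 0" using kJ unfolding kernel_J_def by auto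
lemma J_bound: obtains B where "B > 0" "\<And>x. J x \<le> B"
proof -
  have "bounded (range J)" using kJ unfolding kernel_J_def by auto
  then obtain B where "\<And>x. norm (J x) \<le> B" unfolding bounded_iff by auto
  then have "\<And>x. J x \<le> max B 1" by (metis abs_ge_self max.coboundedI1 order_trans real_norm_def)
  then show ?thesis using that[of "max B 1"] by simp
qed

lemma J_cont_comp[continuous_intros]: "continuous_on S f \<Longrightarrow> continuous_on S (\<lambda>x. J (f x))"
  using continuous_on_compose2[OF J_cont] by auto

lemma integrable_JD: "continuous_on {L1..L2} \<phi> \<Longrightarrow> (\<lambda>y. J (x - y) * \<phi> y) integrable_on {L1..L2}"
  by (intro integrable_continuous_interval continuous_intros)

lemma A_cont: assumes "continuous_on {L1..L2} \<phi>" shows "continuous_on S (Aop J L1 L2 \<phi>)"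
proof -
  have "continuous_on (UNIV \<times> cbox L1 L2) (\<lambda>(x, t). J (x - t) * \<phi> t)"
    apply (simp add: split_beta)
    apply (intro continuous_intros)
    apply (rule continuous_on_compose2[OF assms])
    by (auto intro: continuous_intros)
  from integral_continuous_on_param[OF this] show ?thesis
    unfolding Aop_def by (auto intro: continuous_on_subset)
qed

lemma A_nonneg: assumes "continuous_on {L1..L2} \<phi>" "\<And>y. y \<in> {L1..L2} \<Longrightarrow> \<phi> y \<ge> 0"
  shows "Aop J L1 L2 \<phi> x \<ge> 0"
  unfolding Aop_def using assms J_nonneg by (intro integral_nonneg integrable_JD) auto

lemma A_mono: assumes "continuous_on {L1..L2} \<phi>" "continuous_on {L1..L2} \<psi>"
   "\<And>y. y \<in> {L1..L2} \<Longrightarrow> \<phi> y \<le> \<psi> y"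
  shows "Aop J L1 L2 \<phi> x \<le> Aop J L1 L2 \<psi> x"
  unfolding Aop_def using assms J_nonneg
  by (intro integral_le integrable_JD) (auto intro: mult_left_mono)

lemma A_add: assumes "continuous_on {L1..L2} \<phi>" "continuous_on {L1..L2} \<psi>"
  shows "Aop J L1 L2 (\<lambda>y. \<phi> y + \<psi> y) x = Aop J L1 L2 \<phi> x + Aop J L1 L2 \<psi> x"
  unfolding Aop_def using integral_add[OF integrable_JD[OF assms(1)] integrable_JD[OF assms(2)]]
  by (simp add: distrib_left)

lemma A_cmul: "Aop J L1 L2 (\<lambda>y. c * \<phi> y) x = c * Aop J L1 L2 \<phi> x"
  unfolding Aop_def by (simp add: mult.left_commute)

lemma A_diff: assumes "continuous_on {L1..L2} \<phi>" "continuous_on {L1..L2} \<psi>"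
  shows "Aop J L1 L2 (\<lambda>y. \<phi> y - \<psi> y) x = Aop J L1 L2 \<phi> x - Aop J L1 L2 \<psi> x"
  unfolding Aop_def using integral_diff[OF integrable_JD[OF assms(1)] integrable_JD[OF assms(2)]]
  by (simp add: right_diff_distrib)

lemma int_J_le1: assumes "a \<le> b" shows "integral {a..b} (\<lambda>y. J (x - y)) \<le> 1"
proof -
  have e: "(\<lambda>y. J (x - y)) = J \<circ> ((+) (-x))"
    by (rule ext) (metis J_sym comp_apply minus_diff_eq uminus_add_conv_diff)
  have "integral {a..b} (\<lambda>y. J (x - y)) = integral {a + -x..b + -x} J"
    unfolding e by (rule integral_shift_Icc_real)
  also have "\<dots> \<le> integral UNIV J"
    apply (rule integral_subset_le)
    using J_int J_nonneg by (auto intro!: integrable_continuous_interval continuous_on_subset[OF J_cont])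
  also have "\<dots> = 1" using J_int by (simp add: integral_unique)
  finally show ?thesis .
qed

lemma A_one_le: "Aop J L1 L2 (\<lambda>_. 1) x \<le> 1"
  unfolding Aop_def using int_J_le1[of L1 L2 x] L12 by simp

lemma int_cont: "continuous_on {L1..L2} f \<Longrightarrow> f integrable_on {L1..L2}"
  for f :: "real \<Rightarrow> real" by (metis integrable_continuous_real)

lemma iabs: "f integrable_on S \<Longrightarrow> g integrable_on S \<Longrightarrow> (\<And>x. x \<in> S \<Longrightarrow> \<bar>f x\<bar> \<le> g x)
   \<Longrightarrow> \<bar>integral S f\<bar> \<le> integral S g" for f g :: "real \<Rightarrow> real"
  using integral_norm_bound_integral[of f S g] by simp

lemma A_sym: assumes u: "continuous_on {L1..L2} u" and v: "continuous_on {L1..L2} v"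
  shows "integral {L1..L2} (\<lambda>x. u x * Aop J L1 L2 v x) = integral {L1..L2} (\<lambda>x. v x * Aop J L1 L2 u x)"
proof -
  have c: "continuous_on (cbox (L1,L1) (L2,L2)) (\<lambda>(x,y). u x * J (x - y) * v y)"
    unfolding cbox_Pair_eq
    apply (simp add: split_beta)
    apply (intro continuous_intros)
      apply (rule continuous_on_compose2[OF u]) apply (auto intro: continuous_intros)[3]
    apply (rule continuous_on_compose2[OF v]) by (auto intro: continuous_intros)
  have "integral {L1..L2} (\<lambda>x. u x * Aop J L1 L2 v x) = integral (cbox L1 L2) (\<lambda>x. integral (cbox L1 L2) (\<lambda>y. u x * J (x - y) * v y))"
    unfolding Aop_def by (simp add: mult.assoc)
  also have "\<dots> = integral (cbox L1 L2) (\<lambda>y. integral (cbox L1 L2) (\<lambda>x. u x * J (x - y) * v y))"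
    by (rule integral_swap_continuous[OF c])
  also have "\<dots> = integral {L1..L2} (\<lambda>x. v x * Aop J L1 L2 u x)"
    unfolding Aop_def
    apply (simp only: cbox_interval)
    apply (rule integral_cong)
    apply (subst integral_mult_right[symmetric])
    apply (rule integral_cong)
    by (metis J_sym minus_diff_eq mult.commute mult.left_commute)
  finally show ?thesis .
qed

lemma amgm: fixes a b p q :: real assumes "p > 0" "q > 0" shows "a * b \<le> (a^2 * q / p + b^2 * p / q) / 2"
proof -
  have "0 \<le> (a * q - b * p)^2 / (p * q)" using assms by simp
  also have "\<dots> = a^2 * q / p + b^2 * p / q - 2 * a * b"
    using assms by (simp add: field_simps power2_eq_square)
  finally show ?thesis by simp
qed

lemma picone: assumes phi: "continuous_on {L1..L2} \<phi>" "\<And>x. x \<in> {L1..L2} \<Longrightarrow> \<phi> x > 0"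
  and psi: "continuous_on {L1..L2} \<psi>"
  shows "integral {L1..L2} (\<lambda>x. \<psi> x * Aop J L1 L2 \<psi> x)
     \<le> integral {L1..L2} (\<lambda>x. \<psi> x ^ 2 / \<phi> x * Aop J L1 L2 \<phi> x)"
proof -
  define q where "q = (\<lambda>y. \<psi> y ^ 2 / \<phi> y)"
  have cq: "continuous_on {L1..L2} q" unfolding q_def
    using phi psi by (intro continuous_intros) (auto, metis atLeastAtMost_iff less_irrefl)
  have pt: "\<psi> x * Aop J L1 L2 \<psi> x \<le> (\<psi> x ^ 2 / \<phi> x / 2) * Aop J L1 L2 \<phi> x + (\<phi> x / 2) * Aop J L1 L2 q x"
    if x: "x \<in> {L1..L2}" for x
  proof -
    have "\<psi> x * Aop J L1 L2 \<psi> x = Aop J L1 L2 (\<lambda>y. \<psi> x * \<psi> y) x" by (simp add: A_cmul)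
    also have "\<dots> \<le> Aop J L1 L2 (\<lambda>y. (\<psi> x ^ 2 / \<phi> x / 2) * \<phi> y + (\<phi> x / 2) * q y) x"
      apply (rule A_mono)
      using psi apply (auto intro!: continuous_intros)[1]
      subgoal using cq phi(1) by (intro continuous_intros) auto
      subgoal for y using amgm[of "\<phi> x" "\<phi> y" "\<psi> x" "\<psi> y"] phi(2)[OF x] phi(2)[of y]
        by (simp add: mult.commute q_def) done
    also have "\<dots> = (\<psi> x ^ 2 / \<phi> x / 2) * Aop J L1 L2 \<phi> x + (\<phi> x / 2) * Aop J L1 L2 q x"
      apply (subst A_add)
      subgoal using cq phi(1) by (intro continuous_intros) auto
      subgoal using cq phi(1) by (intro continuous_intros) auto
      by (simp only: A_cmul)
    finally show ?thesis .
  qed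
  have ca: "continuous_on {L1..L2} (Aop J L1 L2 f)" if "continuous_on {L1..L2} f" for f
    using A_cont[OF that] .
  have cpsq: "continuous_on {L1..L2} (\<lambda>x. \<psi> x ^ 2 / \<phi> x)" using cq unfolding q_def .
  have "integral {L1..L2} (\<lambda>x. \<psi> x * Aop J L1 L2 \<psi> x) \<le> integral {L1..L2}
     (\<lambda>x. (\<psi> x ^ 2 / \<phi> x / 2) * Aop J L1 L2 \<phi> x + (\<phi> x / 2) * Aop J L1 L2 q x)"
    apply (rule integral_le)
    using psi ca[OF psi] apply (auto intro!: int_cont continuous_intros)[1]
    subgoal using cpsq ca[OF phi(1)] ca[OF cq] phi psi by (intro int_cont continuous_intros) (auto, metis atLeastAtMost_iff less_irrefl)
    using pt by auto
  also have "\<dots> = (integral {L1..L2} (\<lambda>x. \<psi> x ^ 2 / \<phi> x * Aop J L1 L2 \<phi> x) +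
      integral {L1..L2} (\<lambda>x. \<phi> x * Aop J L1 L2 q x)) / 2"
  proof -
    have i1: "(\<lambda>x. \<psi> x ^ 2 / \<phi> x * Aop J L1 L2 \<phi> x) integrable_on {L1..L2}"
      using cpsq ca[OF phi(1)] phi psi by (intro int_cont continuous_intros) (auto, metis atLeastAtMost_iff less_irrefl)
    have i2: "(\<lambda>x. \<phi> x * Aop J L1 L2 q x) integrable_on {L1..L2}"
      using phi(1) ca[OF cq] by (intro int_cont continuous_intros)
    have "integral {L1..L2} (\<lambda>x. (\<psi> x ^ 2 / \<phi> x / 2) * Aop J L1 L2 \<phi> x + (\<phi> x / 2) * Aop J L1 L2 q x)
      = integral {L1..L2} (\<lambda>x. (\<psi> x ^ 2 / \<phi> x * Aop J L1 L2 \<phi> x + \<phi> x * Aop J L1 L2 q x) / 2)"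
      by (rule integral_cong) (simp add: field_simps)
    also have "\<dots> = integral {L1..L2} (\<lambda>x. \<psi> x ^ 2 / \<phi> x * Aop J L1 L2 \<phi> x + \<phi> x * Aop J L1 L2 q x) / 2"
      by (rule integral_divide)
    finally show ?thesis using integral_add[OF i1 i2] by simp
  qed
  also have "integral {L1..L2} (\<lambda>x. \<phi> x * Aop J L1 L2 q x)
     = integral {L1..L2} (\<lambda>x. \<psi> x ^ 2 / \<phi> x * Aop J L1 L2 \<phi> x)"
    using A_sym[OF phi(1) cq] unfolding q_def .
  finally show ?thesis by simp
qed

lemma A_abs: assumes "continuous_on {L1..L2} u"
  shows "\<bar>Aop J L1 L2 u x\<bar> \<le> Aop J L1 L2 (\<lambda>y. \<bar>u y\<bar>) x"
proof -
  have "Aop J L1 L2 u x \<le> Aop J L1 L2 (\<lambda>y. \<bar>u y\<bar>) x"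
    using assms by (intro A_mono) (auto intro: continuous_intros)
  moreover have "- Aop J L1 L2 u x \<le> Aop J L1 L2 (\<lambda>y. \<bar>u y\<bar>) x"
  proof -
    have "Aop J L1 L2 (\<lambda>y. - u y) x \<le> Aop J L1 L2 (\<lambda>y. \<bar>u y\<bar>) x"
      by (rule A_mono) (auto intro: continuous_intros assms)
    then show ?thesis using A_cmul[of "-1" u x] by simp
  qed
  ultimately show ?thesis by linarith
qed

lemma form_abs: assumes "continuous_on {L1..L2} u"
  shows "\<bar>integral {L1..L2} (\<lambda>x. u x * Aop J L1 L2 u x)\<bar>
    \<le> integral {L1..L2} (\<lambda>x. \<bar>u x\<bar> * Aop J L1 L2 (\<lambda>y. \<bar>u y\<bar>) x)"
proof -
  have cu: "continuous_on {L1..L2} (\<lambda>y. \<bar>u y\<bar>)" using assms by (intro continuous_intros)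
  show ?thesis
    apply (rule iabs)
    using assms cu A_cont[OF assms] A_cont[OF cu] apply (auto intro!: int_cont continuous_intros)[2]
    using A_abs[OF assms] by (simp add: abs_mult mult_left_mono)
qed

lemma sqlem: fixes m I S L :: real assumes "0 \<le> S - 2 * m * I + m^2 * L" "m * L = I" "L1 < L2" "L = L2 - L1"
  shows "I^2 \<le> L * S"
proof -
  have "L * (S - 2 * m * I + m^2 * L) = L * S - I^2"
    using assms(2) by (simp add: algebra_simps power2_eq_square flip: assms(2))
  then show ?thesis using assms by (metis diff_ge_0_iff_ge mult_nonneg_nonneg diff_gt_0_iff_gt less_imp_le)
qed

lemma cauchy_abs: assumes "continuous_on {L1..L2} u"
  shows "(integral {L1..L2} (\<lambda>y. \<bar>u y\<bar>))^2 \<le> (L2 - L1) * integral {L1..L2} (\<lambda>y. (u y)^2)"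
proof -
  define m where "m = integral {L1..L2} (\<lambda>y. \<bar>u y\<bar>) / (L2 - L1)"
  have cu: "continuous_on {L1..L2} (\<lambda>y. \<bar>u y\<bar>)" using assms by (intro continuous_intros)
  have "0 \<le> integral {L1..L2} (\<lambda>y. (\<bar>u y\<bar> - m)^2)" by (rule integral_nonneg) (auto intro!: int_cont continuous_intros assms)
  also have "integral {L1..L2} (\<lambda>y. (\<bar>u y\<bar> - m)^2) =
     integral {L1..L2} (\<lambda>y. (u y)^2) - 2 * m * integral {L1..L2} (\<lambda>y. \<bar>u y\<bar>) + m^2 * (L2 - L1)"
  proof -
    have "integral {L1..L2} (\<lambda>y. (\<bar>u y\<bar> - m)^2) = integral {L1..L2} (\<lambda>y. ((u y)^2 - 2 * m * \<bar>u y\<bar>) + m^2)"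
      by (rule integral_cong) (simp add: power2_eq_square algebra_simps)
    also have "\<dots> = integral {L1..L2} (\<lambda>y. (u y)^2 - 2 * m * \<bar>u y\<bar>) + integral {L1..L2} (\<lambda>y. m^2)"
      by (rule integral_add) (auto intro!: int_cont continuous_intros assms)
    also have "integral {L1..L2} (\<lambda>y. (u y)^2 - 2 * m * \<bar>u y\<bar>) = integral {L1..L2} (\<lambda>y. (u y)^2) - integral {L1..L2} (\<lambda>y. 2 * m * \<bar>u y\<bar>)"
      by (rule integral_diff) (auto intro!: int_cont continuous_intros assms)
    finally show ?thesis using L12 by simp
  qed
  finally have "0 \<le> integral {L1..L2} (\<lambda>y. (u y)^2) - 2 * m * integral {L1..L2} (\<lambda>y. \<bar>u y\<bar>) + m^2 * (L2 - L1)" .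
  moreover have "m * (L2 - L1) = integral {L1..L2} (\<lambda>y. \<bar>u y\<bar>)" unfolding m_def using L12 by simp
  ultimately show ?thesis by (intro sqlem[OF _ _ L12 refl])
qed

lemma A_sup: assumes "continuous_on {L1..L2} u" "\<And>x. J x \<le> B"
  shows "\<bar>Aop J L1 L2 u x\<bar> \<le> B * integral {L1..L2} (\<lambda>y. \<bar>u y\<bar>)"
proof -
  have "\<bar>Aop J L1 L2 u x\<bar> \<le> integral {L1..L2} (\<lambda>y. B * \<bar>u y\<bar>)"
    unfolding Aop_def
    apply (rule iabs)
    using assms apply (auto intro!: int_cont continuous_intros)[2]
    using assms J_nonneg by (simp add: abs_mult mult_right_mono)
  then show ?thesis by simp
qed

lemma Apow_cont: "continuous_on {L1..L2} (Apow J L1 L2 k)"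
  by (induct k) (auto intro: A_cont)

lemma Apow_bounds: "0 \<le> Apow J L1 L2 k x \<and> Apow J L1 L2 k x \<le> 1"
proof (induct k arbitrary: x)
  case 0 then show ?case by simp
next
  case (Suc k)
  have "Apow J L1 L2 (Suc k) x \<le> Aop J L1 L2 (\<lambda>_. 1) x"
    using Suc Apow_cont by (auto intro!: A_mono)
  then show ?case using A_one_le[of x] Suc Apow_cont by (auto intro!: A_nonneg)
qed

lemma J_pos_near0: obtains \<eta> \<delta> where "\<eta> > 0" "\<delta> > 0" "\<And>t. \<bar>t\<bar> \<le> \<delta> \<Longrightarrow> J t \<ge> \<eta>"
proof -
  have "isCont J 0" using J_cont by (simp add: continuous_on_eq_continuous_at)
  then obtain d where d: "d > 0" "\<And>t. \<bar>t - 0\<bar> < d \<Longrightarrow> \<bar>J t - J 0\<bar> < J 0 / 2"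
    using J0 unfolding continuous_at_eps_delta[of 0 J] dist_real_def
    by (metis half_gt_zero)
  show ?thesis
  proof (rule that[of "J 0 / 2" "d / 2"])
    fix t :: real assume "\<bar>t\<bar> \<le> d / 2"
    then have "\<bar>J t - J 0\<bar> < J 0 / 2" using d by auto
    then show "J 0 / 2 \<le> J t" by linarith
  qed (use J0 d in auto)
qed

lemma int_lower: fixes f :: "real \<Rightarrow> real" and a b c :: real assumes "a \<le> b" "continuous_on {a..b} f" "\<And>y. y \<in> {a..b} \<Longrightarrow> c \<le> f y"
  shows "(b - a) * c \<le> integral {a..b} f"
proof -
  have "integral {a..b} (\<lambda>y. c) \<le> integral {a..b} f"
    by (rule integral_le) (use assms in \<open>auto intro: integrable_continuous_real\<close>)
  then show ?thesis using assms by simp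
qed

lemma Apow_leak: obtains \<epsilon> K where "\<epsilon> > 0" "K \<ge> 1" "\<And>x. x \<in> {L1..L2} \<Longrightarrow> Apow J L1 L2 K x \<le> 1 - \<epsilon>"
proof -
  obtain \<eta> \<delta> where ed: "\<eta> > 0" "\<delta> > 0" "\<And>t. \<bar>t\<bar> \<le> \<delta> \<Longrightarrow> J t \<ge> \<eta>" by (rule J_pos_near0) blast
  define l where "l = L2 - L1"
  have l: "l > 0" using L12 unfolding l_def by simp
  obtain K :: nat where K: "real K > 2 * l / \<delta>" using reals_Archimedean2 by blast
  have "0 < 2 * l / \<delta>" using l ed by simp
  then have "0 < real K" using K by linarith
  then have K1: "K \<ge> 1" by simp
  define s where "s = l / K"
  have s: "s > 0" "K * s = l" using K1 l unfolding s_def by auto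
  have s2: "2 * s \<le> \<delta>" using K ed l K1 unfolding s_def by (simp add: field_simps)
  have claim: "\<exists>\<epsilon>>0. \<forall>x\<in>{L1..L2}. x \<ge> L2 - k * s \<longrightarrow> Apow J L1 L2 k x \<le> 1 - \<epsilon>"
    if "1 \<le> k" "k \<le> K" for k
    using that
  proof (induct k)
    case 0 then show ?case by simp
  next
    case (Suc k)
    show ?case
    proof (cases "k = 0")
      case True
      have "Apow J L1 L2 1 x \<le> 1 - s * \<eta>" if x: "x \<in> {L1..L2}" "x \<ge> L2 - s" for x
      proof -
        have ci: "continuous_on S (\<lambda>y. J (x - y))" for S by (intro continuous_intros)
        have "integral {L1..L2} (\<lambda>y. J (x - y)) + integral {L2..L2+s} (\<lambda>y. J (x - y))
           = integral {L1..L2+s} (\<lambda>y. J (x - y))"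
          using L12 s by (intro Henstock_Kurzweil_Integration.integral_combine) (auto intro: integrable_continuous_real ci)
        also have "\<dots> \<le> 1" using L12 s by (intro int_J_le1) auto
        finally have 1: "integral {L1..L2} (\<lambda>y. J (x - y)) + integral {L2..L2+s} (\<lambda>y. J (x - y)) \<le> 1" .
        have "(L2 + s - L2) * \<eta> \<le> integral {L2..L2+s} (\<lambda>y. J (x - y))"
          using s x s2 by (intro int_lower ci ed(3)) auto
        then show ?thesis using 1 by (simp add: Aop_def)
      qed
      then show ?thesis using True s ed by (intro exI[of _ "s * \<eta>"]) auto
    next
      case False
      then obtain \<epsilon> where eps: "\<epsilon> > 0" "\<And>x. x \<in> {L1..L2} \<Longrightarrow> x \<ge> L2 - k * s \<Longrightarrow> Apow J L1 L2 k x \<le> 1 - \<epsilon>"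
        using Suc by auto
      have kK: "k * s \<le> l" using Suc s by (metis Suc_leD mult_right_mono of_nat_le_iff less_imp_le)
      have k1: "k \<ge> 1" using False by simp
      have "Apow J L1 L2 (Suc k) x \<le> 1 - s * (\<eta> * \<epsilon>)" if x: "x \<in> {L1..L2}" "x \<ge> L2 - (Suc k) * s" for x
      proof -
        define a where "a = (if x \<le> L2 - k * s + s then L2 - k * s else x - s)"
        have a1: "L1 \<le> a" "a + s \<le> L2" using kK x k1 s unfolding a_def l_def
          by (auto simp: field_simps)
        have a2: "\<bar>x - y\<bar> \<le> \<delta>" "y \<ge> L2 - k * s" if "y \<in> {a..a+s}" for y
          using that x s2 unfolding a_def by (auto split: if_splits simp: algebra_simps)
        have cp: "continuous_on {L1..L2} (\<lambda>y. 1 - Apow J L1 L2 k y)" using Apow_cont by (intro continuous_intros)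
        have cj: "continuous_on S (\<lambda>y. J (x - y) * (1 - Apow J L1 L2 k y))" if "S \<subseteq> {L1..L2}" for S
          using continuous_on_subset[OF Apow_cont that] by (intro continuous_intros)
        have "s * (\<eta> * \<epsilon>) \<le> integral {a..a+s} (\<lambda>y. J (x - y) * (1 - Apow J L1 L2 k y))"
          using int_lower[of a "a+s" "\<lambda>y. J (x - y) * (1 - Apow J L1 L2 k y)" "\<eta> * \<epsilon>"] s
        proof -
          have "\<eta> * \<epsilon> \<le> J (x - y) * (1 - Apow J L1 L2 k y)" if "y \<in> {a..a+s}" for y
          proof -
            have "y \<in> {L1..L2}" using that a1 by auto
            then have "\<epsilon> \<le> 1 - Apow J L1 L2 k y" using eps(2)[of y] a2[OF that] by auto
            then show ?thesis using ed(3)[OF a2(1)[OF that]] ed eps(1) by (intro mult_mono) auto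
          qed
          then show ?thesis using int_lower[of a "a+s" "\<lambda>y. J (x - y) * (1 - Apow J L1 L2 k y)" "\<eta> * \<epsilon>"] s a1
            cj[of "{a..a+s}"] by auto
        qed
        also have "\<dots> \<le> integral {L1..L2} (\<lambda>y. J (x - y) * (1 - Apow J L1 L2 k y))"
          apply (rule integral_subset_le)
          using a1 apply auto[1]
          using cj a1 apply (auto intro!: integrable_continuous_real)[2]
          using Apow_bounds J_nonneg by (simp add: mult_nonneg_nonneg)
        also have "\<dots> = Aop J L1 L2 (\<lambda>_. 1) x - Apow J L1 L2 (Suc k) x"
          using A_diff[of "\<lambda>_. 1" "Apow J L1 L2 k" x] Apow_cont by (simp add: Aop_def)
        finally show ?thesis using A_one_le[of x] by linarith
      qed
      then show ?thesis using s ed eps by (intro exI[of _ "s * (\<eta> * \<epsilon>)"]) auto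
    qed
  qed
  obtain \<epsilon> where "\<epsilon> > 0" "\<And>x. x \<in> {L1..L2} \<Longrightarrow> x \<ge> L2 - K * s \<Longrightarrow> Apow J L1 L2 K x \<le> 1 - \<epsilon>"
    using claim[OF K1 order_refl] by auto
  then show ?thesis using that[of \<epsilon> K] K1 s unfolding l_def by auto
qed

lemma A_sum: fixes n :: nat assumes "\<And>k. continuous_on {L1..L2} (f k)"
  shows "Aop J L1 L2 (\<lambda>y. \<Sum>k<n. f k y) x = (\<Sum>k<n. Aop J L1 L2 (f k) x)"
proof (induct n)
  case 0 then show ?case by (simp add: Aop_def)
next
  case (Suc n)
  have "Aop J L1 L2 (\<lambda>y. \<Sum>k<Suc n. f k y) x = Aop J L1 L2 (\<lambda>y. (\<Sum>k<n. f k y) + f n y) x" by simp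
  also have "\<dots> = Aop J L1 L2 (\<lambda>y. \<Sum>k<n. f k y) x + Aop J L1 L2 (f n) x"
    using assms by (intro A_add continuous_on_sum) auto
  finally show ?case using Suc by simp
qed

lemma leak: obtains g r M where "continuous_on {L1..L2} g" "\<And>x. x \<in> {L1..L2} \<Longrightarrow> g x > 0" "r < 1"
  "\<And>x. x \<in> {L1..L2} \<Longrightarrow> Aop J L1 L2 g x \<le> r * g x" "\<And>x. 1 \<le> g x" "\<And>x. g x \<le> M"
proof -
  obtain \<epsilon> K where eK: "\<epsilon> > 0" "K \<ge> 1" "\<And>x. x \<in> {L1..L2} \<Longrightarrow> Apow J L1 L2 K x \<le> 1 - \<epsilon>"
    by (rule Apow_leak) blast
  define g where "g = (\<lambda>y. \<Sum>k<K. Apow J L1 L2 k y)"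
  have cg: "continuous_on {L1..L2} g" unfolding g_def using Apow_cont by (intro continuous_on_sum) auto
  have gb: "1 \<le> g x \<and> g x \<le> K" for x
  proof -
    obtain m where m: "K = Suc m" using eK by (cases K) auto
    have "g x = 1 + (\<Sum>k<m. Apow J L1 L2 (Suc k) x)" unfolding g_def m sum.lessThan_Suc_shift by simp
    moreover have "0 \<le> (\<Sum>k<m. Apow J L1 L2 (Suc k) x)" using Apow_bounds by (intro sum_nonneg) blast
    moreover have "(\<Sum>k<m. Apow J L1 L2 (Suc k) x) \<le> (\<Sum>k<m. 1)" using Apow_bounds by (intro sum_mono) blast
    ultimately show ?thesis using m by auto
  qed
  have Ag: "Aop J L1 L2 g x = g x - 1 + Apow J L1 L2 K x" for x
  proof -
    have "Aop J L1 L2 g x = (\<Sum>k<K. Apow J L1 L2 (Suc k) x)"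
      unfolding g_def using Apow_cont by (subst A_sum) auto
    also have "\<dots> = g x - 1 + Apow J L1 L2 K x"
      unfolding g_def using sum.lessThan_Suc_shift[of "\<lambda>k. Apow J L1 L2 k x" K] sum.lessThan_Suc[of "\<lambda>k. Apow J L1 L2 k x" K]
      by simp
    finally show ?thesis .
  qed
  show ?thesis
  proof (rule that[of g "1 - \<epsilon> / K" K])
    show "1 \<le> g x" "g x \<le> K" for x using gb[of x] by auto
    show "continuous_on {L1..L2} g" by (rule cg)
    show "g x > 0" for x using gb[of x] by simp
    show "1 - \<epsilon> / real K < 1" using eK by simp
    fix x assume x: "x \<in> {L1..L2}"
    have "Aop J L1 L2 g x \<le> g x - \<epsilon>" using Ag eK(3)[OF x] by simp
    also have "\<dots> \<le> (1 - \<epsilon> / K) * g x"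
    proof -
      have "\<epsilon> / K * g x \<le> \<epsilon> / K * K" using gb[of x] eK by (intro mult_left_mono) auto
      then show ?thesis using eK by (simp add: algebra_simps)
    qed
    finally show "Aop J L1 L2 g x \<le> (1 - \<epsilon> / K) * g x" .
  qed
qed

lemma form_leak: obtains r where "r < 1" "\<And>\<psi>. continuous_on {L1..L2} \<psi> \<Longrightarrow>
    integral {L1..L2} (\<lambda>x. \<psi> x * Aop J L1 L2 \<psi> x) \<le> r * integral {L1..L2} (\<lambda>x. \<psi> x ^ 2)"
proof -
  obtain g r where gr: "continuous_on {L1..L2} g" "\<And>x. x \<in> {L1..L2} \<Longrightarrow> g x > 0" "r < 1"
    "\<And>x. x \<in> {L1..L2} \<Longrightarrow> Aop J L1 L2 g x \<le> r * g x" by (rule leak) blast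
  show ?thesis
  proof (rule that[OF gr(3)])
    fix \<psi> :: "real \<Rightarrow> real" assume psi: "continuous_on {L1..L2} \<psi>"
    have nz: "\<forall>x\<in>{L1..L2}. g x \<noteq> 0" using gr(2) by force
    have "integral {L1..L2} (\<lambda>x. \<psi> x * Aop J L1 L2 \<psi> x) \<le> integral {L1..L2} (\<lambda>x. \<psi> x ^ 2 / g x * Aop J L1 L2 g x)"
      by (rule picone[OF gr(1,2) psi])
    also have "\<dots> \<le> integral {L1..L2} (\<lambda>x. r * \<psi> x ^ 2)"
      apply (rule integral_le)
      using psi gr(1) A_cont[OF gr(1)] nz apply (auto intro!: int_cont continuous_intros)[2]
    proof -
      fix x assume x: "x \<in> {L1..L2}"
      have "\<psi> x ^ 2 / g x * Aop J L1 L2 g x \<le> \<psi> x ^ 2 / g x * (r * g x)"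
        using gr(2,4)[OF x] by (intro mult_left_mono) auto
      then show "\<psi> x ^ 2 / g x * Aop J L1 L2 g x \<le> r * \<psi> x ^ 2" using gr(2)[OF x] by (simp add: mult.commute)
    qed
    finally show "integral {L1..L2} (\<lambda>x. \<psi> x * Aop J L1 L2 \<psi> x) \<le> r * integral {L1..L2} (\<lambda>x. \<psi> x ^ 2)" by simp
  qed
qed

end
context kern begin

lemma int_lin3: fixes f1 f2 f3 :: "real \<Rightarrow> real" and t :: real assumes "continuous_on {L1..L2} f1" "continuous_on {L1..L2} f2" "continuous_on {L1..L2} f3"
  shows "integral {L1..L2} (\<lambda>x. f1 x + t * f2 x + t^2 * f3 x)
     = integral {L1..L2} f1 + t * integral {L1..L2} f2 + t^2 * integral {L1..L2} f3"
proof -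
  have i: "f1 integrable_on {L1..L2}" "(\<lambda>x. t * f2 x) integrable_on {L1..L2}" "(\<lambda>x. t^2 * f3 x) integrable_on {L1..L2}"
    using assms by (auto intro!: int_cont continuous_intros)
  have "integral {L1..L2} (\<lambda>x. f1 x + t * f2 x + t^2 * f3 x) = integral {L1..L2} (\<lambda>x. f1 x + t * f2 x) + integral {L1..L2} (\<lambda>x. t^2 * f3 x)"
    using i by (intro integral_add integrable_add) auto
  also have "integral {L1..L2} (\<lambda>x. f1 x + t * f2 x) = integral {L1..L2} f1 + integral {L1..L2} (\<lambda>x. t * f2 x)"
    using i by (intro integral_add) auto
  finally show ?thesis by simp
qed

lemma form_exp: assumes u: "continuous_on {L1..L2} u" and w: "continuous_on {L1..L2} w"
  shows "integral {L1..L2} (\<lambda>x. (u x + t * w x) * Aop J L1 L2 (\<lambda>y. u y + t * w y) x)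
    = integral {L1..L2} (\<lambda>x. u x * Aop J L1 L2 u x) + 2 * t * integral {L1..L2} (\<lambda>x. w x * Aop J L1 L2 u x)
      + t^2 * integral {L1..L2} (\<lambda>x. w x * Aop J L1 L2 w x)"
proof -
  have cw: "continuous_on {L1..L2} (\<lambda>y. t * w y)" using w by (intro continuous_intros)
  have e: "Aop J L1 L2 (\<lambda>y. u y + t * w y) x = Aop J L1 L2 u x + t * Aop J L1 L2 w x" for x
    using A_add[OF u cw, of x] A_cmul[of t w x] by simp
  have "integral {L1..L2} (\<lambda>x. (u x + t * w x) * Aop J L1 L2 (\<lambda>y. u y + t * w y) x)
    = integral {L1..L2} (\<lambda>x. u x * Aop J L1 L2 u x + t * (u x * Aop J L1 L2 w x + w x * Aop J L1 L2 u x) + t^2 * (w x * Aop J L1 L2 w x))"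
    unfolding e by (rule integral_cong) (simp add: algebra_simps power2_eq_square)
  also have "\<dots> = integral {L1..L2} (\<lambda>x. u x * Aop J L1 L2 u x) + t * integral {L1..L2} (\<lambda>x. u x * Aop J L1 L2 w x + w x * Aop J L1 L2 u x)
      + t^2 * integral {L1..L2} (\<lambda>x. w x * Aop J L1 L2 w x)"
    using u w A_cont[OF u] A_cont[OF w] by (intro int_lin3 continuous_intros)
  also have "integral {L1..L2} (\<lambda>x. u x * Aop J L1 L2 w x + w x * Aop J L1 L2 u x)
     = 2 * integral {L1..L2} (\<lambda>x. w x * Aop J L1 L2 u x)"
    using u w A_cont[OF u] A_cont[OF w] A_sym[OF u w]
    by (subst integral_add) (auto intro!: int_cont continuous_intros)
  finally show ?thesis by simp
qed

end




locale hardset = k1: kern J1 L1 L2 + k2: kern J2 L1 L2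
  for J1 J2 :: "real \<Rightarrow> real" and L1 L2 :: real +
  fixes c1 c2 W1 W2 \<epsilon> :: real
  assumes c1: "c1 \<ge> 0" and c2: "c2 \<ge> 0" and W1: "W1 > 0" and W2: "W2 > 0"
    and eps: "0 < \<epsilon>" "\<epsilon> < 1"
    and H: "\<And>u1 u2. continuous_on {L1..L2} u1 \<Longrightarrow> continuous_on {L1..L2} u2 \<Longrightarrow>
       c1 * integral {L1..L2} (\<lambda>x. u1 x * Aop J1 L1 L2 u1 x) + c2 * integral {L1..L2} (\<lambda>x. u2 x * Aop J2 L1 L2 u2 x)
       + 2 * integral {L1..L2} (\<lambda>x. u1 x * u2 x)
       \<le> (1 - \<epsilon>) * (W1 * integral {L1..L2} (\<lambda>x. u1 x ^ 2) + W2 * integral {L1..L2} (\<lambda>x. u2 x ^ 2))"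
begin

abbreviation II :: "(real \<Rightarrow> real) \<Rightarrow> real" where "II f \<equiv> integral {L1..L2} f"
abbreviation cD :: "(real \<Rightarrow> real) \<Rightarrow> bool" where "cD f \<equiv> continuous_on {L1..L2} f"

definition BG where "BG u1 u2 v1 v2 = c1 * II (\<lambda>x. v1 x * Aop J1 L1 L2 u1 x) + c2 * II (\<lambda>x. v2 x * Aop J2 L1 L2 u2 x)"
definition NGb where "NGb u1 u2 v1 v2 = II (\<lambda>x. W1 * u1 x * v1 x + W2 * u2 x * v2 x - u1 x * v2 x - u2 x * v1 x)"
definition NW where "NW u1 u2 = W1 * II (\<lambda>x. u1 x ^ 2) + W2 * II (\<lambda>x. u2 x ^ 2)"

lemma L12: "L1 < L2" by (rule k1.L12)

lemma int_comb3: fixes f g h :: "real \<Rightarrow> real" assumes "cD f" "cD g" "cD h"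
  shows "II (\<lambda>x. a * f x + b * g x + c * h x) = a * II f + b * II g + c * II h"
proof -
  have i: "(\<lambda>x. a * f x) integrable_on {L1..L2}" "(\<lambda>x. b * g x) integrable_on {L1..L2}" "(\<lambda>x. c * h x) integrable_on {L1..L2}"
    using assms by (auto intro!: k1.int_cont continuous_intros)
  have "II (\<lambda>x. a * f x + b * g x + c * h x) = II (\<lambda>x. a * f x + b * g x) + II (\<lambda>x. c * h x)"
    using i by (intro integral_add integrable_add) auto
  also have "II (\<lambda>x. a * f x + b * g x) = II (\<lambda>x. a * f x) + II (\<lambda>x. b * g x)"
    using i by (intro integral_add) auto
  finally show ?thesis by simp
qed

lemma sq_nonneg_int: "cD u \<Longrightarrow> II (\<lambda>x. u x ^ 2) \<ge> 0"
  by (rule integral_nonneg) (auto intro!: k1.int_cont continuous_intros)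

lemma NW_nonneg: "cD u1 \<Longrightarrow> cD u2 \<Longrightarrow> NW u1 u2 \<ge> 0"
  unfolding NW_def using sq_nonneg_int W1 W2 by (simp add: add_nonneg_nonneg)

lemma NG_eq: assumes "cD u1" "cD u2"
  shows "NGb u1 u2 u1 u2 = NW u1 u2 - 2 * II (\<lambda>x. u1 x * u2 x)"
proof -
  have "NGb u1 u2 u1 u2 = II (\<lambda>x. W1 * (u1 x ^ 2) + W2 * (u2 x ^ 2) + (-2) * (u1 x * u2 x))"
    unfolding NGb_def by (rule integral_cong) (simp add: power2_eq_square algebra_simps)
  also have "\<dots> = W1 * II (\<lambda>x. u1 x ^ 2) + W2 * II (\<lambda>x. u2 x ^ 2) + (-2) * II (\<lambda>x. u1 x * u2 x)"
    using assms by (intro int_comb3 continuous_intros)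
  finally show ?thesis unfolding NW_def by simp
qed

lemma prod_le_abs: assumes "cD u1" "cD u2"
  shows "II (\<lambda>x. u1 x * u2 x) \<le> II (\<lambda>x. \<bar>u1 x\<bar> * \<bar>u2 x\<bar>)"
  using assms by (intro integral_le) (auto intro!: k1.int_cont continuous_intros simp: abs_mult[symmetric])

lemma BG_abs_nonneg: assumes "cD u1" "cD u2"
  shows "BG (\<lambda>y. \<bar>u1 y\<bar>) (\<lambda>y. \<bar>u2 y\<bar>) (\<lambda>y. \<bar>u1 y\<bar>) (\<lambda>y. \<bar>u2 y\<bar>) \<ge> 0"
proof -
  have a: "cD (\<lambda>y. \<bar>u1 y\<bar>)" "cD (\<lambda>y. \<bar>u2 y\<bar>)" using assms by (auto intro: continuous_intros)
  have "II (\<lambda>x. \<bar>u1 x\<bar> * Aop J1 L1 L2 (\<lambda>y. \<bar>u1 y\<bar>) x) \<ge> 0"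
    using a k1.A_cont[OF a(1)] k1.A_nonneg[OF a(1)]
    by (intro integral_nonneg) (auto intro!: k1.int_cont continuous_intros)
  moreover have "II (\<lambda>x. \<bar>u2 x\<bar> * Aop J2 L1 L2 (\<lambda>y. \<bar>u2 y\<bar>) x) \<ge> 0"
    using a k2.A_cont[OF a(2)] k2.A_nonneg[OF a(2)]
    by (intro integral_nonneg) (auto intro!: k1.int_cont continuous_intros)
  ultimately show ?thesis unfolding BG_def using c1 c2 by simp
qed

lemma H_abs: assumes "cD u1" "cD u2"
  shows "BG (\<lambda>y. \<bar>u1 y\<bar>) (\<lambda>y. \<bar>u2 y\<bar>) (\<lambda>y. \<bar>u1 y\<bar>) (\<lambda>y. \<bar>u2 y\<bar>)
     + 2 * II (\<lambda>x. \<bar>u1 x\<bar> * \<bar>u2 x\<bar>) \<le> (1 - \<epsilon>) * NW u1 u2"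
  using H[of "\<lambda>y. \<bar>u1 y\<bar>" "\<lambda>y. \<bar>u2 y\<bar>"] assms unfolding BG_def NW_def
  by (auto intro: continuous_intros)

lemma NG_ge: assumes "cD u1" "cD u2" shows "NGb u1 u2 u1 u2 \<ge> \<epsilon> * NW u1 u2"
proof -
  have "(1 - \<epsilon>) * NW u1 u2 = NW u1 u2 - \<epsilon> * NW u1 u2" by (simp add: algebra_simps)
  then show ?thesis using H_abs[OF assms] BG_abs_nonneg[OF assms] NG_eq[OF assms] prod_le_abs[OF assms]
    by linarith
qed

definition K0 where "K0 = 1 + 1 / W1 + 1 / W2"
definition e2 where "e2 = \<epsilon> / K0"

lemma K0: "K0 \<ge> 1" unfolding K0_def using W1 W2 by simp
lemma e2: "0 < e2" "e2 < 1" "e2 \<le> \<epsilon>"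
proof -
  show "0 < e2" unfolding e2_def using eps K0 by simp
  have "\<epsilon> * 1 \<le> \<epsilon> * K0" using eps K0 by (intro mult_left_mono) auto
  then show "e2 \<le> \<epsilon>" unfolding e2_def using eps K0 by (simp add: divide_le_eq)
  then show "e2 < 1" using eps by linarith
qed

lemma NG_le: assumes "cD u1" "cD u2" shows "NGb u1 u2 u1 u2 \<le> K0 * NW u1 u2"
proof -
  have "II (\<lambda>x. -2 * (u1 x * u2 x)) \<le> II (\<lambda>x. u1 x ^ 2 + u2 x ^ 2)"
    apply (rule integral_le)
    using assms apply (auto intro!: k1.int_cont continuous_intros)[2]
  proof -
    fix x have "0 \<le> (u1 x + u2 x)^2" by simp
    then show "-2 * (u1 x * u2 x) \<le> u1 x ^ 2 + u2 x ^ 2" by (simp add: power2_eq_square algebra_simps)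
  qed
  also have "II (\<lambda>x. u1 x ^ 2 + u2 x ^ 2) = II (\<lambda>x. u1 x ^ 2) + II (\<lambda>x. u2 x ^ 2)"
    using assms by (intro integral_add) (auto intro!: k1.int_cont continuous_intros)
  finally have 1: "-2 * II (\<lambda>x. u1 x * u2 x) \<le> II (\<lambda>x. u1 x ^ 2) + II (\<lambda>x. u2 x ^ 2)" by simp
  have a: "W1 * II (\<lambda>x. u1 x ^ 2) \<le> NW u1 u2" "W2 * II (\<lambda>x. u2 x ^ 2) \<le> NW u1 u2"
    unfolding NW_def using sq_nonneg_int assms W1 W2 by auto
  have b: "II (\<lambda>x. u1 x ^ 2) \<le> NW u1 u2 / W1" "II (\<lambda>x. u2 x ^ 2) \<le> NW u1 u2 / W2"
    using a W1 W2 by (auto simp: field_simps)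
  have "K0 * NW u1 u2 = NW u1 u2 + NW u1 u2 / W1 + NW u1 u2 / W2" unfolding K0_def by (simp add: algebra_simps)
  then show ?thesis using NG_eq[OF assms] 1 b by linarith
qed

end


context hardset begin

lemma int_comb2: fixes f g :: "real \<Rightarrow> real" assumes "cD f" "cD g"
  shows "II (\<lambda>x. a * f x + b * g x) = a * II f + b * II g"
  using assms by (subst integral_add) (auto intro!: k1.int_cont continuous_intros)

lemma QB_abs: assumes "cD u1" "cD u2"
  shows "\<bar>BG u1 u2 u1 u2\<bar> \<le> (1 - e2) * NGb u1 u2 u1 u2"
proof -
  have a1: "\<bar>II (\<lambda>x. u1 x * Aop J1 L1 L2 u1 x)\<bar> \<le> II (\<lambda>x. \<bar>u1 x\<bar> * Aop J1 L1 L2 (\<lambda>y. \<bar>u1 y\<bar>) x)"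
    by (rule k1.form_abs[OF assms(1)])
  have a2: "\<bar>II (\<lambda>x. u2 x * Aop J2 L1 L2 u2 x)\<bar> \<le> II (\<lambda>x. \<bar>u2 x\<bar> * Aop J2 L1 L2 (\<lambda>y. \<bar>u2 y\<bar>) x)"
    by (rule k2.form_abs[OF assms(2)])
  have "\<bar>BG u1 u2 u1 u2\<bar> \<le> c1 * \<bar>II (\<lambda>x. u1 x * Aop J1 L1 L2 u1 x)\<bar> + c2 * \<bar>II (\<lambda>x. u2 x * Aop J2 L1 L2 u2 x)\<bar>"
    unfolding BG_def using c1 c2 abs_triangle_ineq[of "c1 * II (\<lambda>x. u1 x * Aop J1 L1 L2 u1 x)" "c2 * II (\<lambda>x. u2 x * Aop J2 L1 L2 u2 x)"]
    by (simp add: abs_mult)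
  also have "\<dots> \<le> BG (\<lambda>y. \<bar>u1 y\<bar>) (\<lambda>y. \<bar>u2 y\<bar>) (\<lambda>y. \<bar>u1 y\<bar>) (\<lambda>y. \<bar>u2 y\<bar>)"
    unfolding BG_def using a1 a2 c1 c2 by (intro add_mono mult_left_mono) auto
  finally have 1: "\<bar>BG u1 u2 u1 u2\<bar> \<le> BG (\<lambda>y. \<bar>u1 y\<bar>) (\<lambda>y. \<bar>u2 y\<bar>) (\<lambda>y. \<bar>u1 y\<bar>) (\<lambda>y. \<bar>u2 y\<bar>)" .
  have 2: "(1 - \<epsilon>) * NW u1 u2 = NW u1 u2 - \<epsilon> * NW u1 u2" by (simp add: algebra_simps)
  have 3: "e2 * NGb u1 u2 u1 u2 \<le> \<epsilon> * NW u1 u2"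
  proof -
    have "e2 * NGb u1 u2 u1 u2 \<le> e2 * (K0 * NW u1 u2)" using NG_le[OF assms] e2 by (intro mult_left_mono) auto
    also have "\<dots> = \<epsilon> * NW u1 u2" unfolding e2_def using K0 by simp
    finally show ?thesis .
  qed
  have 4: "(1 - e2) * NGb u1 u2 u1 u2 = NGb u1 u2 u1 u2 - e2 * NGb u1 u2 u1 u2" by (simp add: algebra_simps)
  show ?thesis using 1 2 3 4 H_abs[OF assms] NG_eq[OF assms] prod_le_abs[OF assms] by linarith
qed

lemma BG_exp: assumes u: "cD u1" "cD u2" and w: "cD w1" "cD w2"
  shows "BG (\<lambda>y. u1 y + t * w1 y) (\<lambda>y. u2 y + t * w2 y) (\<lambda>y. u1 y + t * w1 y) (\<lambda>y. u2 y + t * w2 y)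
    = BG u1 u2 u1 u2 + 2 * t * BG u1 u2 w1 w2 + t^2 * BG w1 w2 w1 w2"
  unfolding BG_def k1.form_exp[OF u(1) w(1)] k2.form_exp[OF u(2) w(2)]
  by (simp add: algebra_simps)

lemma NG_exp: assumes u: "cD u1" "cD u2" and w: "cD w1" "cD w2"
  shows "NGb (\<lambda>y. u1 y + t * w1 y) (\<lambda>y. u2 y + t * w2 y) (\<lambda>y. u1 y + t * w1 y) (\<lambda>y. u2 y + t * w2 y)
    = NGb u1 u2 u1 u2 + 2 * t * NGb u1 u2 w1 w2 + t^2 * NGb w1 w2 w1 w2"
proof -
  have "NGb (\<lambda>y. u1 y + t * w1 y) (\<lambda>y. u2 y + t * w2 y) (\<lambda>y. u1 y + t * w1 y) (\<lambda>y. u2 y + t * w2 y)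
    = II (\<lambda>x. (W1 * u1 x * u1 x + W2 * u2 x * u2 x - u1 x * u2 x - u2 x * u1 x)
        + t * (2 * (W1 * u1 x * w1 x + W2 * u2 x * w2 x - u1 x * w2 x - u2 x * w1 x))
        + t^2 * (W1 * w1 x * w1 x + W2 * w2 x * w2 x - w1 x * w2 x - w2 x * w1 x))"
    unfolding NGb_def by (rule integral_cong) (simp add: algebra_simps power2_eq_square)
  also have "\<dots> = NGb u1 u2 u1 u2 + t * II (\<lambda>x. 2 * (W1 * u1 x * w1 x + W2 * u2 x * w2 x - u1 x * w2 x - u2 x * w1 x)) + t^2 * NGb w1 w2 w1 w2"
    unfolding NGb_def using u w by (intro k1.int_lin3 continuous_intros)
  also have "II (\<lambda>x. 2 * (W1 * u1 x * w1 x + W2 * u2 x * w2 x - u1 x * w2 x - u2 x * w1 x)) = 2 * NGb u1 u2 w1 w2"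
    unfolding NGb_def by (rule Henstock_Kurzweil_Integration.integral_mult_right)
  finally show ?thesis by (simp add: algebra_simps)
qed

lemma polar: assumes u: "cD u1" "cD u2" and w: "cD w1" "cD w2"
  shows "4 * t * BG u1 u2 w1 w2 \<le> 2 * (1 - e2) * (NGb u1 u2 u1 u2 + t^2 * NGb w1 w2 w1 w2)"
proof -
  have cp: "cD (\<lambda>y. u1 y + s * w1 y)" "cD (\<lambda>y. u2 y + s * w2 y)" for s using u w by (auto intro!: continuous_intros)
  let ?k = "1 - e2"
  let ?Bu = "BG u1 u2 u1 u2" and ?Bw = "BG w1 w2 w1 w2" and ?X = "BG u1 u2 w1 w2"
  let ?Nu = "NGb u1 u2 u1 u2" and ?Nw = "NGb w1 w2 w1 w2" and ?Y = "NGb u1 u2 w1 w2"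
  have p: "?Bu + 2 * t * ?X + t^2 * ?Bw \<le> ?k * (?Nu + 2 * t * ?Y + t^2 * ?Nw)"
    using QB_abs[OF cp(1)[of t] cp(2)[of t], unfolded BG_exp[OF u w] NG_exp[OF u w]] by linarith
  have m: "- (?Bu + 2 * (-t) * ?X + (-t)^2 * ?Bw) \<le> ?k * (?Nu + 2 * (-t) * ?Y + (-t)^2 * ?Nw)"
    using QB_abs[OF cp(1)[of "-t"] cp(2)[of "-t"], unfolded BG_exp[OF u w] NG_exp[OF u w]] by linarith
  have e1: "?k * (?Nu + 2 * t * ?Y + t^2 * ?Nw) = ?k * ?Nu + 2 * t * ?k * ?Y + t^2 * ?k * ?Nw" by (simp add: algebra_simps)
  have e2': "?k * (?Nu + 2 * (-t) * ?Y + (-t)^2 * ?Nw) = ?k * ?Nu - 2 * t * ?k * ?Y + t^2 * ?k * ?Nw" by (simp add: algebra_simps)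
  have e3: "2 * ?k * (?Nu + t^2 * ?Nw) = 2 * (?k * ?Nu) + 2 * (t^2 * ?k * ?Nw)" by (simp add: algebra_simps)
  have e4: "- (?Bu + 2 * (-t) * ?X + (-t)^2 * ?Bw) = - ?Bu + 2 * t * ?X - t^2 * ?Bw" by simp
  show ?thesis using p m e1 e2' e3 e4 by linarith
qed

definition Dl where "Dl = W1 * W2 - 1"

lemma Dl_pos: "Dl > 0"
proof -
  define l where "l = L2 - L1"
  have l: "l > 0" using L12 unfolding l_def by simp
  have c0: "cD (\<lambda>_. 1)" "cD (\<lambda>_. W1)" by (auto intro: continuous_intros)
  have "0 \<le> II (\<lambda>x. 1 * Aop J1 L1 L2 (\<lambda>_. 1) x)"
    using k1.A_nonneg[OF c0(1)] by (intro integral_nonneg) (auto intro!: k1.int_cont k1.A_cont)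
  moreover have "0 \<le> II (\<lambda>x. W1 * Aop J2 L1 L2 (\<lambda>_. W1) x)"
    using k2.A_nonneg[OF c0(2)] W1 by (intro integral_nonneg) (auto intro!: k1.int_cont k2.A_cont)
  ultimately have "c1 * II (\<lambda>x. 1 * Aop J1 L1 L2 (\<lambda>_. 1) x) \<ge> 0" "c2 * II (\<lambda>x. W1 * Aop J2 L1 L2 (\<lambda>_. W1) x) \<ge> 0"
    using c1 c2 by auto
  then have "2 * II (\<lambda>x. 1 * W1) \<le> (1 - \<epsilon>) * (W1 * II (\<lambda>x. 1 ^ 2) + W2 * II (\<lambda>x. W1 ^ 2))"
    using H[OF c0] by linarith
  then have "2 * (l * W1) \<le> (1 - \<epsilon>) * (W1 * l + W2 * (l * W1^2))" using L12 unfolding l_def by simp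
  then have "(W1 * l) * 2 \<le> (W1 * l) * ((1 - \<epsilon>) * (1 + W1 * W2))" by (simp add: algebra_simps power2_eq_square)
  then have "2 \<le> (1 - \<epsilon>) * (1 + W1 * W2)" using W1 l by (simp add: mult_le_cancel_left_pos)
  moreover have "(1 - \<epsilon>) * (1 + W1 * W2) < 1 + W1 * W2"
  proof -
    have "0 < \<epsilon> * (1 + W1 * W2)" using eps W1 W2 by (intro mult_pos_pos) (auto intro: add_pos_pos)
    moreover have "(1 - \<epsilon>) * (1 + W1 * W2) = (1 + W1 * W2) - \<epsilon> * (1 + W1 * W2)" by (simp add: algebra_simps)
    ultimately show ?thesis by linarith
  qed
  ultimately show ?thesis unfolding Dl_def by linarith
qed

definition R1 where "R1 u1 u2 = (\<lambda>x. (W2 * c1 * Aop J1 L1 L2 u1 x + c2 * Aop J2 L1 L2 u2 x) / Dl)"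
definition R2 where "R2 u1 u2 = (\<lambda>x. (c1 * Aop J1 L1 L2 u1 x + W1 * c2 * Aop J2 L1 L2 u2 x) / Dl)"

lemma R_cont: assumes "cD u1" "cD u2" shows "cD (R1 u1 u2)" "cD (R2 u1 u2)"
  unfolding R1_def R2_def using Dl_pos k1.A_cont[OF assms(1)] k2.A_cont[OF assms(2)]
  by (auto intro!: continuous_intros)

lemma GR: "W1 * R1 u1 u2 x - R2 u1 u2 x = c1 * Aop J1 L1 L2 u1 x"
          "W2 * R2 u1 u2 x - R1 u1 u2 x = c2 * Aop J2 L1 L2 u2 x"
proof -
  have d: "Dl \<noteq> 0" using Dl_pos by simp
  let ?a = "Aop J1 L1 L2 u1 x" and ?b = "Aop J2 L1 L2 u2 x"
  have "W1 * R1 u1 u2 x - R2 u1 u2 x = (W1 * (W2 * c1 * ?a + c2 * ?b) - (c1 * ?a + W1 * c2 * ?b)) / Dl"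
    unfolding R1_def R2_def by (simp add: diff_divide_distrib)
  also have "W1 * (W2 * c1 * ?a + c2 * ?b) - (c1 * ?a + W1 * c2 * ?b) = Dl * (c1 * ?a)"
    unfolding Dl_def by (simp add: algebra_simps)
  finally show "W1 * R1 u1 u2 x - R2 u1 u2 x = c1 * Aop J1 L1 L2 u1 x" using d by simp
  have "W2 * R2 u1 u2 x - R1 u1 u2 x = (W2 * (c1 * ?a + W1 * c2 * ?b) - (W2 * c1 * ?a + c2 * ?b)) / Dl"
    unfolding R1_def R2_def by (simp add: diff_divide_distrib)
  also have "W2 * (c1 * ?a + W1 * c2 * ?b) - (W2 * c1 * ?a + c2 * ?b) = Dl * (c2 * ?b)"
    unfolding Dl_def by (simp add: algebra_simps)
  finally show "W2 * R2 u1 u2 x - R1 u1 u2 x = c2 * Aop J2 L1 L2 u2 x" using d by simp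
qed

lemma NG_R: assumes "cD u1" "cD u2"
  shows "NGb (R1 u1 u2) (R2 u1 u2) (R1 u1 u2) (R2 u1 u2) = BG u1 u2 (R1 u1 u2) (R2 u1 u2)"
proof -
  let ?r1 = "R1 u1 u2" and ?r2 = "R2 u1 u2"
  have "NGb ?r1 ?r2 ?r1 ?r2 = II (\<lambda>x. c1 * (?r1 x * Aop J1 L1 L2 u1 x) + c2 * (?r2 x * Aop J2 L1 L2 u2 x))"
    unfolding NGb_def
  proof (rule integral_cong)
    fix x
    have "W1 * ?r1 x * ?r1 x + W2 * ?r2 x * ?r2 x - ?r1 x * ?r2 x - ?r2 x * ?r1 x
       = ?r1 x * (W1 * ?r1 x - ?r2 x) + ?r2 x * (W2 * ?r2 x - ?r1 x)" by (simp add: algebra_simps)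
    also have "\<dots> = c1 * (?r1 x * Aop J1 L1 L2 u1 x) + c2 * (?r2 x * Aop J2 L1 L2 u2 x)"
      unfolding GR by simp
    finally show "W1 * ?r1 x * ?r1 x + W2 * ?r2 x * ?r2 x - ?r1 x * ?r2 x - ?r2 x * ?r1 x = c1 * (?r1 x * Aop J1 L1 L2 u1 x) + c2 * (?r2 x * Aop J2 L1 L2 u2 x)" .
  qed
  also have "\<dots> = BG u1 u2 ?r1 ?r2"
    unfolding BG_def using R_cont[OF assms] k1.A_cont[OF assms(1)] k2.A_cont[OF assms(2)]
    by (intro int_comb2 continuous_intros)
  finally show ?thesis .
qed

lemma contr_arith: fixes k N X :: real assumes k: "k > 0" and h: "4 * (1/k) * X \<le> 2 * k * (N + (1/k)^2 * X)"
  shows "X \<le> k^2 * N"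
proof -
  have "k * (4 * (1/k) * X) \<le> k * (2 * k * (N + (1/k)^2 * X))" using k h by (intro mult_left_mono) auto
  moreover have "k * (4 * (1/k) * X) = 4 * X" using k by simp
  moreover have "k * (2 * k * (N + (1/k)^2 * X)) = 2 * (k^2 * N) + 2 * X"
    using k by (simp add: field_simps power2_eq_square)
  ultimately show ?thesis by linarith
qed

lemma R_contract: assumes "cD u1" "cD u2"
  shows "NGb (R1 u1 u2) (R2 u1 u2) (R1 u1 u2) (R2 u1 u2) \<le> (1 - e2)^2 * NGb u1 u2 u1 u2"
proof -
  let ?k = "1 - e2"
  let ?X = "NGb (R1 u1 u2) (R2 u1 u2) (R1 u1 u2) (R2 u1 u2)" and ?N = "NGb u1 u2 u1 u2"
  have k: "?k > 0" using e2 by simp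
  have "4 * (1 / ?k) * ?X \<le> 2 * ?k * (?N + (1 / ?k)^2 * ?X)"
    using polar[OF assms R_cont[OF assms], of "1 / ?k"] unfolding NG_R[OF assms] .
  then show ?thesis using contr_arith[OF k] by blast
qed

lemma sq_sum: fixes p q :: real shows "(p + q)^2 \<le> 2 * p^2 + 2 * q^2"
proof -
  have "0 \<le> (p - q)^2" by simp
  then show ?thesis by (simp add: power2_eq_square algebra_simps)
qed

lemma II_sq_NG1: assumes "cD u1" "cD u2" shows "II (\<lambda>x. u1 x ^ 2) \<le> NGb u1 u2 u1 u2 / (\<epsilon> * W1)"
proof -
  have "\<epsilon> * (W1 * II (\<lambda>x. u1 x ^ 2)) \<le> \<epsilon> * NW u1 u2"
    using eps W2 sq_nonneg_int[OF assms(2)] unfolding NW_def by (intro mult_left_mono) auto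
  then have "(\<epsilon> * W1) * II (\<lambda>x. u1 x ^ 2) \<le> NGb u1 u2 u1 u2" using NG_ge[OF assms] by (simp add: mult.assoc)
  then show ?thesis using eps W1 by (simp add: field_simps)
qed

lemma II_sq_NG2: assumes "cD u1" "cD u2" shows "II (\<lambda>x. u2 x ^ 2) \<le> NGb u1 u2 u1 u2 / (\<epsilon> * W2)"
proof -
  have "\<epsilon> * (W2 * II (\<lambda>x. u2 x ^ 2)) \<le> \<epsilon> * NW u1 u2"
    using eps W1 sq_nonneg_int[OF assms(1)] unfolding NW_def by (intro mult_left_mono) auto
  then have "(\<epsilon> * W2) * II (\<lambda>x. u2 x ^ 2) \<le> NGb u1 u2 u1 u2" using NG_ge[OF assms] by (simp add: mult.assoc)
  then show ?thesis using eps W2 by (simp add: field_simps)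
qed

lemma A1_sq: assumes "cD u" "\<And>x. J1 x \<le> B" shows "(Aop J1 L1 L2 u x)^2 \<le> B^2 * (L2 - L1) * II (\<lambda>x. u x ^ 2)"
proof -
  have B: "B \<ge> 0" using assms(2)[of 0] k1.J_nonneg[of 0] by linarith
  have "\<bar>Aop J1 L1 L2 u x\<bar> \<le> B * II (\<lambda>y. \<bar>u y\<bar>)" by (rule k1.A_sup[OF assms])
  then have "\<bar>Aop J1 L1 L2 u x\<bar>^2 \<le> (B * II (\<lambda>y. \<bar>u y\<bar>))^2" by (intro power_mono) auto
  also have "\<dots> = B^2 * (II (\<lambda>y. \<bar>u y\<bar>))^2" by (simp add: power_mult_distrib)
  also have "\<dots> \<le> B^2 * ((L2 - L1) * II (\<lambda>x. u x ^ 2))" by (intro mult_left_mono k1.cauchy_abs[OF assms(1)]) auto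
  finally show ?thesis by simp
qed

lemma A2_sq: assumes "cD u" "\<And>x. J2 x \<le> B" shows "(Aop J2 L1 L2 u x)^2 \<le> B^2 * (L2 - L1) * II (\<lambda>x. u x ^ 2)"
proof -
  have B: "B \<ge> 0" using assms(2)[of 0] k2.J_nonneg[of 0] by linarith
  have "\<bar>Aop J2 L1 L2 u x\<bar> \<le> B * II (\<lambda>y. \<bar>u y\<bar>)" by (rule k2.A_sup[OF assms])
  then have "\<bar>Aop J2 L1 L2 u x\<bar>^2 \<le> (B * II (\<lambda>y. \<bar>u y\<bar>))^2" by (intro power_mono) auto
  also have "\<dots> = B^2 * (II (\<lambda>y. \<bar>u y\<bar>))^2" by (simp add: power_mult_distrib)
  also have "\<dots> \<le> B^2 * ((L2 - L1) * II (\<lambda>x. u x ^ 2))" by (intro mult_left_mono k2.cauchy_abs[OF assms(1)]) auto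
  finally show ?thesis by simp
qed

lemma lin_sq: fixes al be a b Ca Cb N :: real
  assumes "a^2 \<le> Ca * N" "b^2 \<le> Cb * N"
  shows "(al * a + be * b)^2 \<le> (2 * al^2 * Ca + 2 * be^2 * Cb) * N"
proof -
  have "(al * a + be * b)^2 \<le> 2 * (al * a)^2 + 2 * (be * b)^2" by (rule sq_sum)
  also have "\<dots> = 2 * al^2 * a^2 + 2 * be^2 * b^2" by (simp add: power_mult_distrib)
  also have "\<dots> \<le> 2 * al^2 * (Ca * N) + 2 * be^2 * (Cb * N)"
    using assms by (intro add_mono mult_left_mono) auto
  finally show ?thesis by (simp add: algebra_simps)
qed

lemma R_sup: obtains CS where "CS \<ge> 0" "\<And>u1 u2 x. cD u1 \<Longrightarrow> cD u2 \<Longrightarrow>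
   (R1 u1 u2 x)^2 \<le> CS * NGb u1 u2 u1 u2 \<and> (R2 u1 u2 x)^2 \<le> CS * NGb u1 u2 u1 u2"
proof -
  obtain B1 where B1: "B1 > 0" "\<And>x. J1 x \<le> B1" by (rule k1.J_bound) blast
  obtain B2 where B2: "B2 > 0" "\<And>x. J2 x \<le> B2" by (rule k2.J_bound) blast
  define l where "l = L2 - L1"
  have l: "l > 0" using L12 unfolding l_def by simp
  define Ca where "Ca = B1^2 * l / (\<epsilon> * W1)"
  define Cb where "Cb = B2^2 * l / (\<epsilon> * W2)"
  have Ca: "Ca \<ge> 0" "Cb \<ge> 0" unfolding Ca_def Cb_def using eps W1 W2 l by auto
  have sa: "(Aop J1 L1 L2 u1 x)^2 \<le> Ca * NGb u1 u2 u1 u2" if "cD u1" "cD u2" for u1 u2 x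
  proof -
    have "(Aop J1 L1 L2 u1 x)^2 \<le> B1^2 * l * II (\<lambda>x. u1 x ^ 2)" using A1_sq[OF that(1) B1(2)] unfolding l_def .
    also have "\<dots> \<le> B1^2 * l * (NGb u1 u2 u1 u2 / (\<epsilon> * W1))" using II_sq_NG1[OF that] l by (intro mult_left_mono) auto
    finally show ?thesis unfolding Ca_def by simp
  qed
  have sb: "(Aop J2 L1 L2 u2 x)^2 \<le> Cb * NGb u1 u2 u1 u2" if "cD u1" "cD u2" for u1 u2 x
  proof -
    have "(Aop J2 L1 L2 u2 x)^2 \<le> B2^2 * l * II (\<lambda>x. u2 x ^ 2)" using A2_sq[OF that(2) B2(2)] unfolding l_def .
    also have "\<dots> \<le> B2^2 * l * (NGb u1 u2 u1 u2 / (\<epsilon> * W2))" using II_sq_NG2[OF that] l by (intro mult_left_mono) auto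
    finally show ?thesis unfolding Cb_def by simp
  qed
  define CS where "CS = (2 * (W2 * c1 / Dl)^2 * Ca + 2 * (c2 / Dl)^2 * Cb) + (2 * (c1 / Dl)^2 * Ca + 2 * (W1 * c2 / Dl)^2 * Cb)"
  show ?thesis
  proof (rule that[of CS])
    show "CS \<ge> 0" unfolding CS_def using Ca by (intro add_nonneg_nonneg mult_nonneg_nonneg) auto
    fix u1 u2 x assume u: "cD u1" "cD u2"
    have N: "NGb u1 u2 u1 u2 \<ge> 0" using NG_ge[OF u] NW_nonneg[OF u] eps by (meson less_imp_le mult_nonneg_nonneg order_trans)
    have r1: "R1 u1 u2 x = (W2 * c1 / Dl) * Aop J1 L1 L2 u1 x + (c2 / Dl) * Aop J2 L1 L2 u2 x"
      unfolding R1_def by (simp add: add_divide_distrib)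
    have r2: "R2 u1 u2 x = (c1 / Dl) * Aop J1 L1 L2 u1 x + (W1 * c2 / Dl) * Aop J2 L1 L2 u2 x"
      unfolding R2_def by (simp add: add_divide_distrib)
    have 1: "(R1 u1 u2 x)^2 \<le> (2 * (W2 * c1 / Dl)^2 * Ca + 2 * (c2 / Dl)^2 * Cb) * NGb u1 u2 u1 u2"
      unfolding r1 by (rule lin_sq[OF sa[OF u] sb[OF u]])
    have 2: "(R2 u1 u2 x)^2 \<le> (2 * (c1 / Dl)^2 * Ca + 2 * (W1 * c2 / Dl)^2 * Cb) * NGb u1 u2 u1 u2"
      unfolding r2 by (rule lin_sq[OF sa[OF u] sb[OF u]])
    have p: "0 \<le> 2 * (W2 * c1 / Dl)^2 * Ca + 2 * (c2 / Dl)^2 * Cb" "0 \<le> 2 * (c1 / Dl)^2 * Ca + 2 * (W1 * c2 / Dl)^2 * Cb"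
      using Ca by (auto intro!: add_nonneg_nonneg mult_nonneg_nonneg)
    have "(2 * (W2 * c1 / Dl)^2 * Ca + 2 * (c2 / Dl)^2 * Cb) * NGb u1 u2 u1 u2 \<le> CS * NGb u1 u2 u1 u2"
      unfolding CS_def using N p by (intro mult_right_mono) auto
    moreover have "(2 * (c1 / Dl)^2 * Ca + 2 * (W1 * c2 / Dl)^2 * Cb) * NGb u1 u2 u1 u2 \<le> CS * NGb u1 u2 u1 u2"
      unfolding CS_def using N p by (intro mult_right_mono) auto
    ultimately show "(R1 u1 u2 x)^2 \<le> CS * NGb u1 u2 u1 u2 \<and> (R2 u1 u2 x)^2 \<le> CS * NGb u1 u2 u1 u2"
      using 1 2 by linarith
  qed
qed

definition g1 where "g1 = (W2 + 1) / Dl"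
definition g2 where "g2 = (W1 + 1) / Dl"
definition U where "U n = ((\<lambda>p. (R1 (fst p) (snd p), R2 (fst p) (snd p))) ^^ n) ((\<lambda>_. g1), (\<lambda>_. g2))"

lemma U_0: "U 0 = (\<lambda>_. g1, \<lambda>_. g2)" unfolding U_def by simp
lemma U_Suc: "U (Suc n) = (R1 (fst (U n)) (snd (U n)), R2 (fst (U n)) (snd (U n)))" unfolding U_def by simp

lemma g_facts: "g1 > 0" "g2 > 0" "W1 * g1 - g2 = 1" "W2 * g2 - g1 = 1"
proof -
  have d: "Dl > 0" by (rule Dl_pos)
  show "g1 > 0" "g2 > 0" unfolding g1_def g2_def using d W1 W2 by auto
  have "W1 * g1 - g2 = (W1 * (W2 + 1) - (W1 + 1)) / Dl" unfolding g1_def g2_def by (simp add: diff_divide_distrib)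
  also have "W1 * (W2 + 1) - (W1 + 1) = Dl" unfolding Dl_def by (simp add: algebra_simps)
  finally show "W1 * g1 - g2 = 1" using d by simp
  have "W2 * g2 - g1 = (W2 * (W1 + 1) - (W2 + 1)) / Dl" unfolding g1_def g2_def by (simp add: diff_divide_distrib)
  also have "W2 * (W1 + 1) - (W2 + 1) = Dl" unfolding Dl_def by (simp add: algebra_simps)
  finally show "W2 * g2 - g1 = 1" using d by simp
qed

lemma U_cont: "cD (fst (U n)) \<and> cD (snd (U n))"
  by (induct n) (auto simp: U_0 U_Suc intro: R_cont continuous_intros)

lemma U_nonneg: "0 \<le> fst (U n) x \<and> 0 \<le> snd (U n) x"
proof (induct n arbitrary: x)
  case 0 then show ?case using g_facts by (simp add: U_0)
next
  case (Suc n)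
  have a: "0 \<le> Aop J1 L1 L2 (fst (U n)) x" using U_cont Suc by (intro k1.A_nonneg) auto
  have b: "0 \<le> Aop J2 L1 L2 (snd (U n)) x" using U_cont Suc by (intro k2.A_nonneg) auto
  show ?case unfolding U_Suc R1_def R2_def using a b c1 c2 W1 W2 Dl_pos
    by (auto intro!: divide_nonneg_pos add_nonneg_nonneg mult_nonneg_nonneg)
qed

lemma U_decay: "NGb (fst (U n)) (snd (U n)) (fst (U n)) (snd (U n)) \<le> ((1 - e2)^2)^n * NGb (fst (U 0)) (snd (U 0)) (fst (U 0)) (snd (U 0))"
proof (induct n)
  case 0 then show ?case by simp
next
  case (Suc n)
  have "NGb (fst (U (Suc n))) (snd (U (Suc n))) (fst (U (Suc n))) (snd (U (Suc n)))
     \<le> (1 - e2)^2 * NGb (fst (U n)) (snd (U n)) (fst (U n)) (snd (U n))"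
    unfolding U_Suc fst_conv snd_conv using U_cont by (intro R_contract) auto
  also have "\<dots> \<le> (1 - e2)^2 * (((1 - e2)^2)^n * NGb (fst (U 0)) (snd (U 0)) (fst (U 0)) (snd (U 0)))"
    using Suc by (intro mult_left_mono) auto
  finally show ?case by (simp add: mult.assoc)
qed

definition Phi1 where "Phi1 m = (\<lambda>x. \<Sum>k<m. fst (U k) x)"
definition Phi2 where "Phi2 m = (\<lambda>x. \<Sum>k<m. snd (U k) x)"

lemma Phi_cont: "cD (Phi1 m)" "cD (Phi2 m)"
  unfolding Phi1_def Phi2_def using U_cont by (auto intro!: continuous_on_sum)

lemma Phi_id: "W1 * Phi1 m x - Phi2 m x - c1 * Aop J1 L1 L2 (Phi1 m) x = 1 - (W1 * fst (U m) x - snd (U m) x)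
  \<and> W2 * Phi2 m x - Phi1 m x - c2 * Aop J2 L1 L2 (Phi2 m) x = 1 - (W2 * snd (U m) x - fst (U m) x)"
proof (induct m arbitrary: x)
  case 0
  have "Aop J1 L1 L2 (Phi1 0) x = 0" "Aop J2 L1 L2 (Phi2 0) x = 0" unfolding Phi1_def Phi2_def Aop_def by simp_all
  then show ?case using g_facts unfolding Phi1_def Phi2_def U_0 by simp
next
  case (Suc m)
  have e1: "Phi1 (Suc m) = (\<lambda>y. Phi1 m y + fst (U m) y)" "Phi2 (Suc m) = (\<lambda>y. Phi2 m y + snd (U m) y)"
    unfolding Phi1_def Phi2_def by auto
  have a1: "Aop J1 L1 L2 (Phi1 (Suc m)) x = Aop J1 L1 L2 (Phi1 m) x + Aop J1 L1 L2 (fst (U m)) x"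
    unfolding e1 using Phi_cont U_cont by (intro k1.A_add) auto
  have a2: "Aop J2 L1 L2 (Phi2 (Suc m)) x = Aop J2 L1 L2 (Phi2 m) x + Aop J2 L1 L2 (snd (U m)) x"
    unfolding e1 using Phi_cont U_cont by (intro k2.A_add) auto
  have g1': "W1 * fst (U (Suc m)) x - snd (U (Suc m)) x = c1 * Aop J1 L1 L2 (fst (U m)) x"
    unfolding U_Suc fst_conv snd_conv by (rule GR)
  have g2': "W2 * snd (U (Suc m)) x - fst (U (Suc m)) x = c2 * Aop J2 L1 L2 (snd (U m)) x"
    unfolding U_Suc fst_conv snd_conv by (rule GR)
  show ?case using Suc[of x] a1 a2 g1' g2' e1 by (simp add: algebra_simps)
qed

theorem supersol: "\<exists>\<phi>1 \<phi>2. cD \<phi>1 \<and> cD \<phi>2 \<and> (\<forall>x\<in>{L1..L2}. \<phi>1 x > 0 \<and> \<phi>2 x > 0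
   \<and> c1 * Aop J1 L1 L2 \<phi>1 x + \<phi>2 x \<le> W1 * \<phi>1 x \<and> c2 * Aop J2 L1 L2 \<phi>2 x + \<phi>1 x \<le> W2 * \<phi>2 x)"
proof -
  obtain CS where CS: "CS \<ge> 0" "\<And>u1 u2 x. cD u1 \<Longrightarrow> cD u2 \<Longrightarrow>
   (R1 u1 u2 x)^2 \<le> CS * NGb u1 u2 u1 u2 \<and> (R2 u1 u2 x)^2 \<le> CS * NGb u1 u2 u1 u2" by (rule R_sup) blast
  define N0 where "N0 = NGb (fst (U 0)) (snd (U 0)) (fst (U 0)) (snd (U 0))"
  have N0: "N0 \<ge> 0" unfolding N0_def using NG_ge[of "fst (U 0)" "snd (U 0)"] NW_nonneg[of "fst (U 0)" "snd (U 0)"] U_cont eps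
    by (meson less_imp_le mult_nonneg_nonneg order_trans)
  define \<kappa> where "\<kappa> = 1 / (2 * (W1 + W2 + 1))"
  have ka: "\<kappa> > 0" unfolding \<kappa>_def using W1 W2 by simp
  define q where "q = (1 - e2)^2"
  have q: "0 \<le> q" "q < 1"
  proof -
    show "0 \<le> q" unfolding q_def by simp
    have "(1 - e2) * (1 - e2) < 1 * 1" using e2 by (intro mult_strict_mono) auto
    then show "q < 1" unfolding q_def by (simp add: power2_eq_square)
  qed
  have CN: "CS * N0 \<ge> 0" using CS N0 by simp
  have pos: "0 < \<kappa>^2 / (CS * N0 + 1)" using ka CN by (intro divide_pos_pos) auto
  obtain n where n: "q^n < \<kappa>^2 / (CS * N0 + 1)"
    using real_arch_pow_inv[OF pos q(2)] by blast
  have small: "\<bar>fst (U (Suc n)) x\<bar> \<le> \<kappa> \<and> \<bar>snd (U (Suc n)) x\<bar> \<le> \<kappa>" for x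
  proof -
    have "CS * NGb (fst (U n)) (snd (U n)) (fst (U n)) (snd (U n)) \<le> CS * (q^n * N0)"
      using U_decay[of n] CS unfolding q_def N0_def by (intro mult_left_mono) auto
    also have "\<dots> = (CS * N0) * q^n" by (simp add: algebra_simps)
    also have "\<dots> \<le> CS * N0 * (\<kappa>^2 / (CS * N0 + 1))"
      using n CN by (intro mult_left_mono) auto
    also have "\<dots> \<le> \<kappa>^2"
    proof -
      have "CS * N0 * (\<kappa>^2 / (CS * N0 + 1)) = \<kappa>^2 * (CS * N0 / (CS * N0 + 1))" by simp
      also have "\<dots> \<le> \<kappa>^2 * 1" using CN by (intro mult_left_mono) (auto simp: divide_le_eq)
      finally show ?thesis by simp
    qed
    finally have b: "CS * NGb (fst (U n)) (snd (U n)) (fst (U n)) (snd (U n)) \<le> \<kappa>^2" .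
    have "(fst (U (Suc n)) x)^2 \<le> \<kappa>^2" "(snd (U (Suc n)) x)^2 \<le> \<kappa>^2"
      using CS(2)[of "fst (U n)" "snd (U n)" x] U_cont b unfolding U_Suc by auto
    then show ?thesis using ka by (metis abs_le_square_iff abs_of_pos)
  qed
  define m where "m = Suc (Suc n)"
  show ?thesis
  proof (intro exI conjI ballI)
    show "cD (Phi1 (Suc n))" "cD (Phi2 (Suc n))" by (rule Phi_cont)+
    fix x assume x: "x \<in> {L1..L2}"
    have pos: "Phi1 (Suc n) x \<ge> g1" "Phi2 (Suc n) x \<ge> g2"
    proof -
      have "Phi1 (Suc n) x = fst (U 0) x + (\<Sum>k<n. fst (U (Suc k)) x)" unfolding Phi1_def sum.lessThan_Suc_shift ..
      moreover have "0 \<le> (\<Sum>k<n. fst (U (Suc k)) x)" using U_nonneg by (intro sum_nonneg) auto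
      ultimately show "Phi1 (Suc n) x \<ge> g1" by (simp add: U_0)
      have "Phi2 (Suc n) x = snd (U 0) x + (\<Sum>k<n. snd (U (Suc k)) x)" unfolding Phi2_def sum.lessThan_Suc_shift ..
      moreover have "0 \<le> (\<Sum>k<n. snd (U (Suc k)) x)" using U_nonneg by (intro sum_nonneg) auto
      ultimately show "Phi2 (Suc n) x \<ge> g2" by (simp add: U_0)
    qed
    then show "Phi1 (Suc n) x > 0" "Phi2 (Suc n) x > 0" using g_facts by linarith+
    have s: "\<bar>fst (U (Suc n)) x\<bar> \<le> \<kappa>" "\<bar>snd (U (Suc n)) x\<bar> \<le> \<kappa>" using small by auto
    have ab: "\<bar>W * a - b\<bar> \<le> W * \<kappa> + \<kappa>" if "W > 0" "\<bar>a\<bar> \<le> \<kappa>" "\<bar>b\<bar> \<le> \<kappa>" for W a b :: real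
    proof -
      have "\<bar>W * a - b\<bar> \<le> \<bar>W * a\<bar> + \<bar>b\<bar>" by (rule abs_triangle_ineq4)
      moreover have "\<bar>W * a\<bar> = W * \<bar>a\<bar>" using that by (simp add: abs_mult)
      moreover have "W * \<bar>a\<bar> \<le> W * \<kappa>" using that by (intro mult_left_mono) auto
      ultimately show ?thesis using that by linarith
    qed
    have "\<bar>W1 * fst (U (Suc n)) x - snd (U (Suc n)) x\<bar> \<le> W1 * \<kappa> + \<kappa>"
      using s W1 by (intro ab) auto
    moreover have "\<bar>W2 * snd (U (Suc n)) x - fst (U (Suc n)) x\<bar> \<le> W2 * \<kappa> + \<kappa>"
      using s W2 by (intro ab) auto
    moreover have "W1 * \<kappa> + \<kappa> \<le> 1/2" "W2 * \<kappa> + \<kappa> \<le> 1/2"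
      unfolding \<kappa>_def using W1 W2 by (auto simp: field_simps)
    ultimately show "c1 * Aop J1 L1 L2 (Phi1 (Suc n)) x + Phi2 (Suc n) x \<le> W1 * Phi1 (Suc n) x"
      "c2 * Aop J2 L1 L2 (Phi2 (Suc n)) x + Phi1 (Suc n) x \<le> W2 * Phi2 (Suc n) x"
      using Phi_id[of "Suc n" x] by linarith+
  qed
qed

end



lemma shift_arith: fixes c c' A p1 p2 al lam l0 K \<delta> :: real
  assumes c': "c' > 0" and p: "p1 > 0" "p2 > 0" "A \<ge> 0" and h: "c' * A + p2 \<le> (c' + al - lam) * p1"
    and l: "lam \<ge> l0" and K: "K = max 1 ((al - l0) / c')" and d: "\<delta> \<ge> \<bar>c - c'\<bar> * K"
  shows "c * A + p2 \<le> (c + al - (lam - \<delta>)) * p1"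
proof -
  have K1: "K \<ge> 1" unfolding K by simp
  have "c' * A \<le> (c' + al - lam) * p1" using h p by linarith
  then have "A \<le> ((c' + al - lam) * p1) / c'" using c' by (simp add: field_simps)
  also have "((c' + al - lam) * p1) / c' = p1 + ((al - lam) / c') * p1" using c' by (simp add: field_simps)
  finally have h1: "A \<le> p1 + ((al - lam) / c') * p1" .
  have "(al - lam) / c' \<le> (al - l0) / c'" using l c' by (intro divide_right_mono) auto
  also have "\<dots> \<le> K" unfolding K by simp
  finally have "((al - lam) / c') * p1 \<le> K * p1" using p by (intro mult_right_mono) auto
  then have h3: "A - p1 \<le> K * p1" using h1 by linarith
  have "p1 \<le> K * p1" using K1 p by simp
  then have h4: "p1 - A \<le> K * p1" using p by linarith
  have h5: "(c - c') * (A - p1) \<le> \<bar>c - c'\<bar> * (K * p1)"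
  proof (cases "c \<ge> c'")
    case True
    then have "(c - c') * (A - p1) \<le> (c - c') * (K * p1)" using h3 by (intro mult_left_mono) auto
    then show ?thesis using True by simp
  next
    case False
    then have "(c' - c) * (p1 - A) \<le> (c' - c) * (K * p1)" using h4 by (intro mult_left_mono) auto
    then show ?thesis using False by (simp add: algebra_simps)
  qed
  have h6: "\<bar>c - c'\<bar> * (K * p1) \<le> \<delta> * p1" using d p by (simp add: mult.assoc[symmetric] mult_right_mono)
  have e1: "c * A + p2 = (c' * A + p2) + (c - c') * (A - p1) + (c - c') * p1" by (simp add: algebra_simps)
  have e2: "(c + al - (lam - \<delta>)) * p1 = (c' + al - lam) * p1 + (c - c') * p1 + \<delta> * p1" by (simp add: algebra_simps)
  show ?thesis using e1 e2 h h5 h6 by linarith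
qed

lemma icomb3: fixes f g h :: "real \<Rightarrow> real"
  assumes "f integrable_on S" "g integrable_on S" "h integrable_on S"
  shows "integral S (\<lambda>x. a * f x + b * g x + c * h x) = a * integral S f + b * integral S g + c * integral S h"
proof -
  have i: "(\<lambda>x. a * f x) integrable_on S" "(\<lambda>x. b * g x) integrable_on S" "(\<lambda>x. c * h x) integrable_on S"
    using assms by (auto intro: integrable_on_mult_right)
  have "integral S (\<lambda>x. a * f x + b * g x + c * h x) = integral S (\<lambda>x. a * f x + b * g x) + integral S (\<lambda>x. c * h x)"
    using i by (intro integral_add integrable_add) auto
  also have "integral S (\<lambda>x. a * f x + b * g x) = integral S (\<lambda>x. a * f x) + integral S (\<lambda>x. b * g x)"
    using i by (intro integral_add) auto
  finally show ?thesis by simp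
qed

locale mainset = k1: kern J1 L1 L2 + k2: kern J2 L1 L2
  for J1 J2 :: "real \<Rightarrow> real" and L1 L2 :: real +
  fixes a b e g0 :: real
  assumes a: "a > 0" and b: "b > 0" and e: "e > 0" and g0: "g0 > 0"
begin

abbreviation cD :: "(real \<Rightarrow> real) \<Rightarrow> bool" where "cD f \<equiv> continuous_on {L1..L2} f"
abbreviation II :: "(real \<Rightarrow> real) \<Rightarrow> real" where "II f \<equiv> integral {L1..L2} f"

definition mem where "mem d1 d2 lam \<longleftrightarrow> (\<exists>\<phi>1 \<phi>2.
      continuous_on {L1..L2} \<phi>1 \<and> continuous_on {L1..L2} \<phi>2 \<and>
      (\<forall>x\<in>{L1..L2}. \<phi>1 x > 0 \<and> \<phi>2 x > 0
         \<and> K1op J1 a e L1 L2 d1 \<phi>1 \<phi>2 x + lam * \<phi>1 x \<le> 0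
         \<and> K2op J2 b g0 L1 L2 d2 \<phi>1 \<phi>2 x + lam * \<phi>2 x \<le> 0))"

definition lpx where "lpx d1 d2 = Sup {lam. mem d1 d2 lam}"

lemma lp_eq: "lambda_p J1 J2 a b e g0 L1 L2 d1 d2 = lpx d1 d2"
  unfolding lambda_p_def lpx_def mem_def ..

definition al where "al = a / e"
definition be where "be = b / g0"

lemma K1_iff: "K1op J1 a e L1 L2 d1 \<phi>1 \<phi>2 x + lam * \<phi>1 x \<le> 0 \<longleftrightarrow>
   (d1 / e) * Aop J1 L1 L2 \<phi>1 x + \<phi>2 x \<le> (d1 / e + al - lam) * \<phi>1 x"
  unfolding K1op_def Aop_def al_def by (auto simp: algebra_simps)

lemma K2_iff: "K2op J2 b g0 L1 L2 d2 \<phi>1 \<phi>2 x + lam * \<phi>2 x \<le> 0 \<longleftrightarrow>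
   (d2 / g0) * Aop J2 L1 L2 \<phi>2 x + \<phi>1 x \<le> (d2 / g0 + be - lam) * \<phi>2 x"
  unfolding K2op_def Aop_def be_def by (auto simp: algebra_simps)

lemma mem_def2: "mem d1 d2 lam \<longleftrightarrow> (\<exists>\<phi>1 \<phi>2. cD \<phi>1 \<and> cD \<phi>2 \<and>
      (\<forall>x\<in>{L1..L2}. \<phi>1 x > 0 \<and> \<phi>2 x > 0
         \<and> (d1 / e) * Aop J1 L1 L2 \<phi>1 x + \<phi>2 x \<le> (d1 / e + al - lam) * \<phi>1 x
         \<and> (d2 / g0) * Aop J2 L1 L2 \<phi>2 x + \<phi>1 x \<le> (d2 / g0 + be - lam) * \<phi>2 x))"
  unfolding mem_def K1_iff K2_iff ..

lemma L12: "L1 < L2" by (rule k1.L12)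

lemma mem_down: assumes "mem d1 d2 lam" "lam' \<le> lam" shows "mem d1 d2 lam'"
proof -
  obtain \<phi>1 \<phi>2 where h: "cD \<phi>1" "cD \<phi>2" "\<forall>x\<in>{L1..L2}. 0 < \<phi>1 x \<and> 0 < \<phi>2 x \<and>
        d1 / e * Aop J1 L1 L2 \<phi>1 x + \<phi>2 x \<le> (d1 / e + al - lam) * \<phi>1 x \<and>
        d2 / g0 * Aop J2 L1 L2 \<phi>2 x + \<phi>1 x \<le> (d2 / g0 + be - lam) * \<phi>2 x"
    using assms(1) unfolding mem_def2 by blast
  have "\<forall>x\<in>{L1..L2}. 0 < \<phi>1 x \<and> 0 < \<phi>2 x \<and>
        d1 / e * Aop J1 L1 L2 \<phi>1 x + \<phi>2 x \<le> (d1 / e + al - lam') * \<phi>1 x \<and>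
        d2 / g0 * Aop J2 L1 L2 \<phi>2 x + \<phi>1 x \<le> (d2 / g0 + be - lam') * \<phi>2 x"
  proof
    fix x assume x: "x \<in> {L1..L2}"
    have "(d1 / e + al - lam) * \<phi>1 x \<le> (d1 / e + al - lam') * \<phi>1 x" using h(3)[rule_format, OF x] assms by (intro mult_right_mono) auto
    moreover have "(d2 / g0 + be - lam) * \<phi>2 x \<le> (d2 / g0 + be - lam') * \<phi>2 x" using h(3)[rule_format, OF x] assms by (intro mult_right_mono) auto
    ultimately show "0 < \<phi>1 x \<and> 0 < \<phi>2 x \<and>
        d1 / e * Aop J1 L1 L2 \<phi>1 x + \<phi>2 x \<le> (d1 / e + al - lam') * \<phi>1 x \<and>
        d2 / g0 * Aop J2 L1 L2 \<phi>2 x + \<phi>1 x \<le> (d2 / g0 + be - lam') * \<phi>2 x"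
      using h(3)[rule_format, OF x] by linarith
  qed
  then show ?thesis unfolding mem_def2 using h by blast
qed

lemma mem_point: assumes "mem d1 d2 lam" "d1 \<ge> 0" "d2 \<ge> 0"
  obtains u1 u2 where "u1 > 0" "u2 > 0" "u2 \<le> (d1 / e + al - lam) * u1" "u1 \<le> (d2 / g0 + be - lam) * u2"
proof -
  obtain \<phi>1 \<phi>2 where h: "cD \<phi>1" "cD \<phi>2" "\<forall>x\<in>{L1..L2}. 0 < \<phi>1 x \<and> 0 < \<phi>2 x \<and>
        d1 / e * Aop J1 L1 L2 \<phi>1 x + \<phi>2 x \<le> (d1 / e + al - lam) * \<phi>1 x \<and>
        d2 / g0 * Aop J2 L1 L2 \<phi>2 x + \<phi>1 x \<le> (d2 / g0 + be - lam) * \<phi>2 x"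
    using assms(1) unfolding mem_def2 by blast
  have x: "L1 \<in> {L1..L2}" using L12 by simp
  have pos: "\<And>y. y \<in> {L1..L2} \<Longrightarrow> 0 \<le> \<phi>1 y" "\<And>y. y \<in> {L1..L2} \<Longrightarrow> 0 \<le> \<phi>2 y"
    using h(3) by (auto intro: less_imp_le)
  have "0 \<le> Aop J1 L1 L2 \<phi>1 L1" using h pos by (intro k1.A_nonneg) auto
  moreover have "0 \<le> Aop J2 L1 L2 \<phi>2 L1" using h pos by (intro k2.A_nonneg) auto
  ultimately have A: "0 \<le> d1 / e * Aop J1 L1 L2 \<phi>1 L1" "0 \<le> d2 / g0 * Aop J2 L1 L2 \<phi>2 L1"
    using assms e g0 by auto
  show ?thesis using that[of "\<phi>1 L1" "\<phi>2 L1"] h x A by force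
qed

lemma mem_ub: assumes "mem d1 d2 lam" "d1 \<ge> 0" "d2 \<ge> 0" shows "lam < d1 / e + al"
proof -
  obtain u1 u2 where u: "u1 > 0" "u2 > 0" "u2 \<le> (d1 / e + al - lam) * u1" "u1 \<le> (d2 / g0 + be - lam) * u2"
    by (rule mem_point[OF assms]) blast
  have "0 < (d1 / e + al - lam) * u1" using u by linarith
  then show ?thesis using u by (simp add: zero_less_mult_iff)
qed

lemma bdd: "d1 \<ge> 0 \<Longrightarrow> d2 \<ge> 0 \<Longrightarrow> bdd_above {lam. mem d1 d2 lam}"
  by (rule bdd_aboveI[of _ "d1 / e + al"]) (auto dest: mem_ub)

definition lam0 where "lam0 = (al + be - sqrt ((al - be)^2 + 4)) / 2"
definition v2 where "v2 = al - lam0"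

lemma v_facts: "v2 > 0" "(be - lam0) * v2 = 1"
proof -
  define s where "s = sqrt ((al - be)^2 + 4)"
  have s2: "s^2 = (al - be)^2 + 4" unfolding s_def by simp
  have s0: "s \<ge> 0" unfolding s_def by simp
  have "\<bar>al - be\<bar> < s" unfolding s_def by (rule real_less_rsqrt) (simp add: power2_abs)
  then have l: "al - be < s" "be - al < s" by auto
  have v: "v2 = (al - be + s) / 2" unfolding v2_def lam0_def s_def by (simp add: field_simps)
  have w: "be - lam0 = (be - al + s) / 2" unfolding lam0_def s_def by (simp add: field_simps)
  show "v2 > 0" using v l by simp
  have "(be - lam0) * v2 = (s^2 - (al - be)^2) / 4" unfolding v w by (simp add: field_simps power2_eq_square)
  also have "\<dots> = 1" using s2 by simp
  finally show "(be - lam0) * v2 = 1" .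
qed

lemma lam0_mem: assumes "d1 \<ge> 0" "d2 \<ge> 0" shows "mem d1 d2 lam0"
  unfolding mem_def2
proof (intro exI conjI ballI)
  show "cD (\<lambda>_. 1)" "cD (\<lambda>_. v2)" by (auto intro: continuous_intros)
  fix x assume x: "x \<in> {L1..L2}"
  show "0 < (1::real)" "0 < v2" using v_facts by auto
  have c: "d1 / e \<ge> 0" "d2 / g0 \<ge> 0" using assms e g0 by auto
  have "d1 / e * Aop J1 L1 L2 (\<lambda>_. 1) x \<le> d1 / e * 1" using k1.A_one_le c by (intro mult_left_mono) auto
  then show "d1 / e * Aop J1 L1 L2 (\<lambda>_. 1) x + v2 \<le> (d1 / e + al - lam0) * 1" unfolding v2_def by simp
  have "Aop J2 L1 L2 (\<lambda>_. v2) x = v2 * Aop J2 L1 L2 (\<lambda>_. 1) x" using k2.A_cmul[of v2 "\<lambda>_. 1" x] by simp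
  also have "\<dots> \<le> v2 * 1" using k2.A_one_le v_facts by (intro mult_left_mono) auto
  finally have "d2 / g0 * Aop J2 L1 L2 (\<lambda>_. v2) x \<le> d2 / g0 * v2" using c by (intro mult_left_mono) auto
  then show "d2 / g0 * Aop J2 L1 L2 (\<lambda>_. v2) x + 1 \<le> (d2 / g0 + be - lam0) * v2"
    using v_facts by (simp add: algebra_simps)
qed

lemma mem_ub0: assumes "mem d1 d2 lam" "d1 \<ge> 0" "d2 \<ge> 0" shows "lam \<le> lam0 + max (d1 / e) (d2 / g0)"
proof (rule ccontr)
  assume c: "\<not> ?thesis"
  obtain u1 u2 where u: "u1 > 0" "u2 > 0" "u2 \<le> (d1 / e + al - lam) * u1" "u1 \<le> (d2 / g0 + be - lam) * u2"
    by (rule mem_point[OF assms]) blast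
  have n1: "d1 / e + lam0 - lam < 0" "d2 / g0 + lam0 - lam < 0" using c by auto
  have "v2 * u1 \<le> v2 * ((d2 / g0 + be - lam) * u2)" using u v_facts by (intro mult_left_mono) auto
  have key: "0 \<le> (d1 / e + lam0 - lam) * u1 + v2 * (d2 / g0 + lam0 - lam) * u2"
  proof -
    have e1: "(d1 / e + al - lam) * u1 = (d1 / e + lam0 - lam) * u1 + v2 * u1" unfolding v2_def by (simp add: algebra_simps)
    have e2: "v2 * ((d2 / g0 + be - lam) * u2) = v2 * (d2 / g0 + lam0 - lam) * u2 + (be - lam0) * v2 * u2"
      by (simp add: algebra_simps)
    have "v2 * u1 \<le> v2 * ((d2 / g0 + be - lam) * u2)" using u v_facts by (intro mult_left_mono) auto
    then show ?thesis using u(3) e1 e2 v_facts(2) by simp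
  qed
  have "(d1 / e + lam0 - lam) * u1 < 0" using n1 u by (simp add: mult_neg_pos)
  moreover have "v2 * (d2 / g0 + lam0 - lam) * u2 < 0" using n1 u v_facts by (simp add: mult_pos_neg mult_neg_pos)
  ultimately show False using key by linarith
qed

lemma lp_bounds: assumes "d1 \<ge> 0" "d2 \<ge> 0"
  shows "lam0 \<le> lpx d1 d2" "lpx d1 d2 \<le> lam0 + max (d1 / e) (d2 / g0)"
proof -
  show "lam0 \<le> lpx d1 d2" unfolding lpx_def using lam0_mem[OF assms] bdd[OF assms] by (intro cSup_upper) auto
  show "lpx d1 d2 \<le> lam0 + max (d1 / e) (d2 / g0)" unfolding lpx_def using lam0_mem[OF assms] mem_ub0[OF _ assms]
    by (intro cSup_least) auto
qed

lemma mem_shift: assumes m: "mem d1' d2' lam" and d': "d1' > 0" "d2' > 0" and d: "d1 \<ge> 0" "d2 \<ge> 0"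
  and l: "lam \<ge> l0"
  shows "mem d1 d2 (lam - (\<bar>d1 / e - d1' / e\<bar> * max 1 ((al - l0) / (d1' / e)) + \<bar>d2 / g0 - d2' / g0\<bar> * max 1 ((be - l0) / (d2' / g0))))"
proof -
  let ?K1 = "max 1 ((al - l0) / (d1' / e))" and ?K2 = "max 1 ((be - l0) / (d2' / g0))"
  let ?\<delta> = "\<bar>d1 / e - d1' / e\<bar> * ?K1 + \<bar>d2 / g0 - d2' / g0\<bar> * ?K2"
  obtain \<phi>1 \<phi>2 where h: "cD \<phi>1" "cD \<phi>2" "\<forall>x\<in>{L1..L2}. 0 < \<phi>1 x \<and> 0 < \<phi>2 x \<and>
        d1' / e * Aop J1 L1 L2 \<phi>1 x + \<phi>2 x \<le> (d1' / e + al - lam) * \<phi>1 x \<and>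
        d2' / g0 * Aop J2 L1 L2 \<phi>2 x + \<phi>1 x \<le> (d2' / g0 + be - lam) * \<phi>2 x"
    using m unfolding mem_def2 by blast
  have pos: "\<And>y. y \<in> {L1..L2} \<Longrightarrow> 0 \<le> \<phi>1 y" "\<And>y. y \<in> {L1..L2} \<Longrightarrow> 0 \<le> \<phi>2 y"
    using h(3) by (auto intro: less_imp_le)
  have K0: "?K1 \<ge> 0" "?K2 \<ge> 0" by auto
  have "\<forall>x\<in>{L1..L2}. 0 < \<phi>1 x \<and> 0 < \<phi>2 x \<and>
        d1 / e * Aop J1 L1 L2 \<phi>1 x + \<phi>2 x \<le> (d1 / e + al - (lam - ?\<delta>)) * \<phi>1 x \<and>
        d2 / g0 * Aop J2 L1 L2 \<phi>2 x + \<phi>1 x \<le> (d2 / g0 + be - (lam - ?\<delta>)) * \<phi>2 x"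
  proof
    fix x assume x: "x \<in> {L1..L2}"
    note hx = h(3)[rule_format, OF x]
    have A1: "0 \<le> Aop J1 L1 L2 \<phi>1 x" using h pos by (intro k1.A_nonneg) auto
    have A2: "0 \<le> Aop J2 L1 L2 \<phi>2 x" using h pos by (intro k2.A_nonneg) auto
    have "d1 / e * Aop J1 L1 L2 \<phi>1 x + \<phi>2 x \<le> (d1 / e + al - (lam - ?\<delta>)) * \<phi>1 x"
      apply (rule shift_arith[of "d1' / e" "\<phi>1 x" "\<phi>2 x" "Aop J1 L1 L2 \<phi>1 x" al lam l0 ?K1])
      using d' e hx A1 l K0 by (auto intro: mult_nonneg_nonneg)
    moreover have "d2 / g0 * Aop J2 L1 L2 \<phi>2 x + \<phi>1 x \<le> (d2 / g0 + be - (lam - ?\<delta>)) * \<phi>2 x"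
      apply (rule shift_arith[of "d2' / g0" "\<phi>2 x" "\<phi>1 x" "Aop J2 L1 L2 \<phi>2 x" be lam l0 ?K2])
      using d' g0 hx A2 l K0 by (auto intro: mult_nonneg_nonneg)
    ultimately show "0 < \<phi>1 x \<and> 0 < \<phi>2 x \<and>
        d1 / e * Aop J1 L1 L2 \<phi>1 x + \<phi>2 x \<le> (d1 / e + al - (lam - ?\<delta>)) * \<phi>1 x \<and>
        d2 / g0 * Aop J2 L1 L2 \<phi>2 x + \<phi>1 x \<le> (d2 / g0 + be - (lam - ?\<delta>)) * \<phi>2 x" using hx by simp
  qed
  then show ?thesis unfolding mem_def2 using h by blast
qed

lemma lp_lip: assumes d': "d1' > 0" "d2' > 0" and d: "d1 \<ge> 0" "d2 \<ge> 0"
  shows "lpx d1' d2' - (\<bar>d1 / e - d1' / e\<bar> * max 1 ((al - (lam0 - 1)) / (d1' / e)) + \<bar>d2 / g0 - d2' / g0\<bar> * max 1 ((be - (lam0 - 1)) / (d2' / g0))) \<le> lpx d1 d2"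
proof -
  let ?\<delta> = "\<bar>d1 / e - d1' / e\<bar> * max 1 ((al - (lam0 - 1)) / (d1' / e)) + \<bar>d2 / g0 - d2' / g0\<bar> * max 1 ((be - (lam0 - 1)) / (d2' / g0))"
  have d'0: "d1' \<ge> 0" "d2' \<ge> 0" using d' by auto
  have ne: "{lam. mem d1' d2' lam} \<noteq> {}" using lam0_mem[OF d'0] by auto
  show ?thesis
  proof (rule field_le_epsilon)
    fix \<eta> :: real assume \<eta>: "\<eta> > 0"
    obtain lam where lam: "mem d1' d2' lam" "lpx d1' d2' - \<eta> < lam"
      using less_cSupE[OF _ ne, of "lpx d1' d2' - \<eta>"] \<eta> unfolding lpx_def by auto
    define lam' where "lam' = max lam lam0"
    have m': "mem d1' d2' lam'" unfolding lam'_def using lam lam0_mem[OF d'0] by (cases "lam \<le> lam0") (auto simp: max_def)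
    have "mem d1 d2 (lam' - ?\<delta>)" by (rule mem_shift[OF m' d' d]) (simp add: lam'_def)
    then have "lam' - ?\<delta> \<le> lpx d1 d2" unfolding lpx_def using bdd[OF d] by (intro cSup_upper) auto
    moreover have "lam \<le> lam'" unfolding lam'_def by simp
    ultimately show "lpx d1' d2' - ?\<delta> \<le> lpx d1 d2 + \<eta>" using lam by linarith
  qed
qed

lemma picone_sys: assumes phi: "cD \<phi>1" "cD \<phi>2" "\<And>x. x \<in> {L1..L2} \<Longrightarrow> \<phi>1 x > 0" "\<And>x. x \<in> {L1..L2} \<Longrightarrow> \<phi>2 x > 0"
  and c: "c1 \<ge> 0" "c2 \<ge> 0"
  and sup: "\<And>x. x \<in> {L1..L2} \<Longrightarrow> c1 * Aop J1 L1 L2 \<phi>1 x + \<phi>2 x \<le> W1 * \<phi>1 x"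
           "\<And>x. x \<in> {L1..L2} \<Longrightarrow> c2 * Aop J2 L1 L2 \<phi>2 x + \<phi>1 x \<le> W2 * \<phi>2 x"
  and u: "cD u1" "cD u2"
  shows "c1 * II (\<lambda>x. u1 x * Aop J1 L1 L2 u1 x) + c2 * II (\<lambda>x. u2 x * Aop J2 L1 L2 u2 x)
       + 2 * II (\<lambda>x. u1 x * u2 x) \<le> W1 * II (\<lambda>x. u1 x ^ 2) + W2 * II (\<lambda>x. u2 x ^ 2)"
proof -
  have nz: "\<forall>x\<in>{L1..L2}. \<phi>1 x \<noteq> 0" "\<forall>x\<in>{L1..L2}. \<phi>2 x \<noteq> 0" using phi by force+
  define f1 where "f1 = (\<lambda>x. u1 x ^ 2 / \<phi>1 x * Aop J1 L1 L2 \<phi>1 x)"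
  define f2 where "f2 = (\<lambda>x. u2 x ^ 2 / \<phi>2 x * Aop J2 L1 L2 \<phi>2 x)"
  define f3 where "f3 = (\<lambda>x. u1 x ^ 2 * \<phi>2 x / \<phi>1 x + u2 x ^ 2 * \<phi>1 x / \<phi>2 x)"
  have cf: "cD f1" "cD f2" "cD f3" unfolding f1_def f2_def f3_def
    using phi u nz k1.A_cont[OF phi(1)] k2.A_cont[OF phi(2)] by (auto intro!: continuous_intros)
  have p1: "c1 * II (\<lambda>x. u1 x * Aop J1 L1 L2 u1 x) \<le> c1 * II f1"
    unfolding f1_def using k1.picone[OF phi(1) phi(3) u(1)] c by (intro mult_left_mono) auto
  have p2: "c2 * II (\<lambda>x. u2 x * Aop J2 L1 L2 u2 x) \<le> c2 * II f2"
    unfolding f2_def using k2.picone[OF phi(2) phi(4) u(2)] c by (intro mult_left_mono) auto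
  have p3: "II (\<lambda>x. 2 * (u1 x * u2 x)) \<le> II f3"
    apply (rule integral_le)
    using u apply (auto intro!: k1.int_cont continuous_intros)[1]
    using cf apply (auto intro!: k1.int_cont)[1]
    subgoal for x using k1.amgm[of "\<phi>1 x" "\<phi>2 x" "u1 x" "u2 x"] phi(3,4)[of x] unfolding f3_def by simp
    done
  have "c1 * II f1 + c2 * II f2 + 1 * II f3 = II (\<lambda>x. c1 * f1 x + c2 * f2 x + 1 * f3 x)"
    using cf by (intro icomb3[symmetric] k1.int_cont)
  also have "\<dots> \<le> II (\<lambda>x. W1 * u1 x ^ 2 + W2 * u2 x ^ 2)"
    apply (rule integral_le)
    using cf apply (auto intro!: k1.int_cont continuous_intros)[1]
    using u apply (auto intro!: k1.int_cont continuous_intros)[1]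
  proof -
    fix x assume x: "x \<in> {L1..L2}"
    have e: "c1 * f1 x + c2 * f2 x + 1 * f3 x = u1 x ^ 2 / \<phi>1 x * (c1 * Aop J1 L1 L2 \<phi>1 x + \<phi>2 x)
       + u2 x ^ 2 / \<phi>2 x * (c2 * Aop J2 L1 L2 \<phi>2 x + \<phi>1 x)"
      unfolding f1_def f2_def f3_def by (simp add: algebra_simps)
    have "u1 x ^ 2 / \<phi>1 x * (c1 * Aop J1 L1 L2 \<phi>1 x + \<phi>2 x) \<le> u1 x ^ 2 / \<phi>1 x * (W1 * \<phi>1 x)"
      using sup(1)[OF x] phi(3)[OF x] by (intro mult_left_mono) auto
    moreover have "u2 x ^ 2 / \<phi>2 x * (c2 * Aop J2 L1 L2 \<phi>2 x + \<phi>1 x) \<le> u2 x ^ 2 / \<phi>2 x * (W2 * \<phi>2 x)"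
      using sup(2)[OF x] phi(4)[OF x] by (intro mult_left_mono) auto
    moreover have "u1 x ^ 2 / \<phi>1 x * (W1 * \<phi>1 x) = W1 * u1 x ^ 2" using phi(3)[OF x] by simp
    moreover have "u2 x ^ 2 / \<phi>2 x * (W2 * \<phi>2 x) = W2 * u2 x ^ 2" using phi(4)[OF x] by simp
    ultimately show "c1 * f1 x + c2 * f2 x + 1 * f3 x \<le> W1 * u1 x ^ 2 + W2 * u2 x ^ 2" unfolding e by linarith
  qed
  also have "\<dots> = W1 * II (\<lambda>x. u1 x ^ 2) + W2 * II (\<lambda>x. u2 x ^ 2)"
    using u by (subst integral_add) (auto intro!: k1.int_cont continuous_intros)
  finally have "c1 * II f1 + c2 * II f2 + II f3 \<le> W1 * II (\<lambda>x. u1 x ^ 2) + W2 * II (\<lambda>x. u2 x ^ 2)" by simp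
  moreover have "II (\<lambda>x. 2 * (u1 x * u2 x)) = 2 * II (\<lambda>x. u1 x * u2 x)"
    by (rule Henstock_Kurzweil_Integration.integral_mult_right)
  ultimately show ?thesis using p1 p2 p3 by linarith
qed

lemma kern1: "kern J1 L1 L2" by (rule kern.intro) (rule k1.kJ, rule k1.L12)
lemma kern2: "kern J2 L1 L2" by (rule kern.intro) (rule k2.kJ, rule k2.L12)

lemma W_pos: assumes "mem d1 d2 lam" "d1 \<ge> 0" "d2 \<ge> 0" shows "d1 / e + al - lam > 0" "d2 / g0 + be - lam > 0"
proof -
  obtain u1 u2 where u: "u1 > 0" "u2 > 0" "u2 \<le> (d1 / e + al - lam) * u1" "u1 \<le> (d2 / g0 + be - lam) * u2"
    by (rule mem_point[OF assms]) blast
  have "0 < (d1 / e + al - lam) * u1" using u by linarith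
  then show "d1 / e + al - lam > 0" using u by (simp add: zero_less_mult_iff)
  have "0 < (d2 / g0 + be - lam) * u2" using u by linarith
  then show "d2 / g0 + be - lam > 0" using u by (simp add: zero_less_mult_iff)
qed

lemma lp_strict: assumes d: "0 < d1'" "d1' < d1" "0 < d2'" "d2' < d2"
  shows "lpx d1' d2' < lpx d1 d2"
proof -
  obtain r1 where r1: "r1 < 1" "\<And>\<psi>. cD \<psi> \<Longrightarrow> II (\<lambda>x. \<psi> x * Aop J1 L1 L2 \<psi> x) \<le> r1 * II (\<lambda>x. \<psi> x ^ 2)"
    by (rule k1.form_leak) blast
  obtain r2 where r2: "r2 < 1" "\<And>\<psi>. cD \<psi> \<Longrightarrow> II (\<lambda>x. \<psi> x * Aop J2 L1 L2 \<psi> x) \<le> r2 * II (\<lambda>x. \<psi> x ^ 2)"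
    by (rule k2.form_leak) blast
  define r where "r = max (max r1 r2) 0"
  have r: "0 \<le> r" "r < 1" "r1 \<le> r" "r2 \<le> r" unfolding r_def using r1 r2 by auto
  define c1 where "c1 = d1 / e"
  define c2 where "c2 = d2 / g0"
  define c1' where "c1' = d1' / e"
  define c2' where "c2' = d2' / g0"
  have cc: "0 < c1'" "c1' < c1" "0 < c2'" "c2' < c2" unfolding c1_def c2_def c1'_def c2'_def
    using d e g0 by (auto simp: divide_strict_right_mono)
  define \<kappa> where "\<kappa> = min ((c1 - c1') * (1 - r)) ((c2 - c2') * (1 - r))"
  have ka: "\<kappa> > 0" "\<kappa> \<le> (c1 - c1') * (1 - r)" "\<kappa> \<le> (c2 - c2') * (1 - r)" "\<kappa> \<le> c1 - c1'" "\<kappa> \<le> c2 - c2'"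
  proof -
    show "\<kappa> > 0" unfolding \<kappa>_def using cc r by auto
    show k1: "\<kappa> \<le> (c1 - c1') * (1 - r)" "\<kappa> \<le> (c2 - c2') * (1 - r)" unfolding \<kappa>_def by auto
    have "(c1 - c1') * (1 - r) \<le> (c1 - c1')" using cc r by (intro mult_left_le) auto
    then show "\<kappa> \<le> c1 - c1'" using k1 by linarith
    have "(c2 - c2') * (1 - r) \<le> (c2 - c2')" using cc r by (intro mult_left_le) auto
    then show "\<kappa> \<le> c2 - c2'" using k1 by linarith
  qed
  have d'0: "d1' \<ge> 0" "d2' \<ge> 0" using d by auto
  have d0: "d1 \<ge> 0" "d2 \<ge> 0" using d by auto
  have ne: "{lam. mem d1' d2' lam} \<noteq> {}" using lam0_mem[OF d'0] by auto
  obtain lam where lam: "mem d1' d2' lam" "lpx d1' d2' - \<kappa> / 4 < lam"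
    using less_cSupE[OF _ ne, of "lpx d1' d2' - \<kappa> / 4"] ka unfolding lpx_def by auto
  obtain \<phi>1 \<phi>2 where h: "cD \<phi>1" "cD \<phi>2" "\<forall>x\<in>{L1..L2}. 0 < \<phi>1 x \<and> 0 < \<phi>2 x \<and>
        d1' / e * Aop J1 L1 L2 \<phi>1 x + \<phi>2 x \<le> (d1' / e + al - lam) * \<phi>1 x \<and>
        d2' / g0 * Aop J2 L1 L2 \<phi>2 x + \<phi>1 x \<le> (d2' / g0 + be - lam) * \<phi>2 x"
    using lam(1) unfolding mem_def2 by blast
  define W1' where "W1' = c1' + al - lam"
  define W2' where "W2' = c2' + be - lam"
  have W': "W1' > 0" "W2' > 0" using W_pos[OF lam(1) d'0] unfolding W1'_def W2'_def c1'_def c2'_def by auto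
  have pic: "c1' * II (\<lambda>x. u1 x * Aop J1 L1 L2 u1 x) + c2' * II (\<lambda>x. u2 x * Aop J2 L1 L2 u2 x)
       + 2 * II (\<lambda>x. u1 x * u2 x) \<le> W1' * II (\<lambda>x. u1 x ^ 2) + W2' * II (\<lambda>x. u2 x ^ 2)"
    if u: "cD u1" "cD u2" for u1 u2
    apply (rule picone_sys[OF h(1,2) _ _ _ _ _ _ u])
    using h(3) cc unfolding W1'_def W2'_def c1'_def c2'_def by auto
  define W1 where "W1 = c1 + al - (lam + \<kappa> / 2)"
  define W2 where "W2 = c2 + be - (lam + \<kappa> / 2)"
  have W: "W1 > \<kappa> / 2" "W2 > \<kappa> / 2" unfolding W1_def W2_def using W' ka unfolding W1'_def W2'_def by auto
  define \<epsilon> where "\<epsilon> = \<kappa> / (2 * (W1 + W2))"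
  have eps: "0 < \<epsilon>" "\<epsilon> < 1" "\<epsilon> * W1 \<le> \<kappa> / 2" "\<epsilon> * W2 \<le> \<kappa> / 2"
  proof -
    have s: "W1 + W2 > 0" using W ka by linarith
    show "0 < \<epsilon>" unfolding \<epsilon>_def using s ka by simp
    have "\<kappa> < 2 * W1" using W by (simp add: field_simps)
    then have "\<kappa> < 2 * (W1 + W2)" using W ka by (simp add: field_simps)
    then show "\<epsilon> < 1" unfolding \<epsilon>_def using s by simp
    have "\<epsilon> * W1 = \<kappa> / 2 * (W1 / (W1 + W2))" unfolding \<epsilon>_def by simp
    also have "\<dots> \<le> \<kappa> / 2 * 1" using s W ka by (intro mult_left_mono) auto
    finally show "\<epsilon> * W1 \<le> \<kappa> / 2" by simp
    have "\<epsilon> * W2 = \<kappa> / 2 * (W2 / (W1 + W2))" unfolding \<epsilon>_def by simp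
    also have "\<dots> \<le> \<kappa> / 2 * 1" using s W ka by (intro mult_left_mono) auto
    finally show "\<epsilon> * W2 \<le> \<kappa> / 2" by simp
  qed
  have H: "c1 * II (\<lambda>x. u1 x * Aop J1 L1 L2 u1 x) + c2 * II (\<lambda>x. u2 x * Aop J2 L1 L2 u2 x)
       + 2 * II (\<lambda>x. u1 x * u2 x)
       \<le> (1 - \<epsilon>) * (W1 * II (\<lambda>x. u1 x ^ 2) + W2 * II (\<lambda>x. u2 x ^ 2))" if u: "cD u1" "cD u2" for u1 u2
  proof -
    let ?Q1 = "II (\<lambda>x. u1 x * Aop J1 L1 L2 u1 x)" and ?Q2 = "II (\<lambda>x. u2 x * Aop J2 L1 L2 u2 x)"
    let ?S1 = "II (\<lambda>x. u1 x ^ 2)" and ?S2 = "II (\<lambda>x. u2 x ^ 2)" and ?P = "II (\<lambda>x. u1 x * u2 x)"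
    have S: "?S1 \<ge> 0" "?S2 \<ge> 0" using u by (auto intro!: integral_nonneg k1.int_cont continuous_intros)
    have q1: "(c1 - c1') * ?Q1 \<le> (c1 - c1') * (r * ?S1)"
    proof -
      have "?Q1 \<le> r1 * ?S1" by (rule r1(2)[OF u(1)])
      also have "\<dots> \<le> r * ?S1" using r S by (intro mult_right_mono) auto
      finally show ?thesis using cc by (intro mult_left_mono) auto
    qed
    have q2: "(c2 - c2') * ?Q2 \<le> (c2 - c2') * (r * ?S2)"
    proof -
      have "?Q2 \<le> r2 * ?S2" by (rule r2(2)[OF u(2)])
      also have "\<dots> \<le> r * ?S2" using r S by (intro mult_right_mono) auto
      finally show ?thesis using cc by (intro mult_left_mono) auto
    qed
    have k1': "\<kappa> * ?S1 \<le> (c1 - c1') * (1 - r) * ?S1" using ka S by (intro mult_right_mono) auto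
    have k2': "\<kappa> * ?S2 \<le> (c2 - c2') * (1 - r) * ?S2" using ka S by (intro mult_right_mono) auto
    have e1: "\<epsilon> * W1 * ?S1 \<le> \<kappa> / 2 * ?S1" using eps S by (intro mult_right_mono) auto
    have e2: "\<epsilon> * W2 * ?S2 \<le> \<kappa> / 2 * ?S2" using eps S by (intro mult_right_mono) auto
    have ex0: "c1 * ?Q1 = c1' * ?Q1 + (c1 - c1') * ?Q1" "c2 * ?Q2 = c2' * ?Q2 + (c2 - c2') * ?Q2"
      "(1 - \<epsilon>) * (W1 * ?S1 + W2 * ?S2) = W1 * ?S1 + W2 * ?S2 - \<epsilon> * W1 * ?S1 - \<epsilon> * W2 * ?S2"
      "(c1 - c1') * (1 - r) * ?S1 = (c1 - c1') * ?S1 - (c1 - c1') * (r * ?S1)"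
      "(c2 - c2') * (1 - r) * ?S2 = (c2 - c2') * ?S2 - (c2 - c2') * (r * ?S2)"
      by (simp_all add: algebra_simps)
    have ex: "W1 * ?S1 = W1' * ?S1 + (c1 - c1') * ?S1 - \<kappa> / 2 * ?S1"
      "W2 * ?S2 = W2' * ?S2 + (c2 - c2') * ?S2 - \<kappa> / 2 * ?S2"
      unfolding W1_def W2_def W1'_def W2'_def by (simp_all add: algebra_simps)
    show ?thesis using pic[OF u] q1 q2 k1' k2' e1 e2 ex ex0 by linarith
  qed
  have hs: "hardset J1 J2 L1 L2 c1 c2 W1 W2 \<epsilon>"
    unfolding hardset_def hardset_axioms_def using kern1 kern2 cc W ka eps H by auto
  obtain \<psi>1 \<psi>2 where ps: "cD \<psi>1" "cD \<psi>2" "\<forall>x\<in>{L1..L2}. \<psi>1 x > 0 \<and> \<psi>2 x > 0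
   \<and> c1 * Aop J1 L1 L2 \<psi>1 x + \<psi>2 x \<le> W1 * \<psi>1 x \<and> c2 * Aop J2 L1 L2 \<psi>2 x + \<psi>1 x \<le> W2 * \<psi>2 x"
    using hardset.supersol[OF hs] by blast
  have "mem d1 d2 (lam + \<kappa> / 2)" unfolding mem_def2
    using ps unfolding W1_def W2_def c1_def c2_def by blast
  then have "lam + \<kappa> / 2 \<le> lpx d1 d2" unfolding lpx_def using bdd[OF d0] by (intro cSup_upper) auto
  then show ?thesis using lam ka by linarith
qed

lemma lp_top: obtains r1 r2 M1 M2 where "r1 < 1" "r2 < 1" "\<And>d1 d2. d1 \<ge> 0 \<Longrightarrow> d2 \<ge> 0 \<Longrightarrow>
   min (d1 / e * (1 - r1) + al - M2) (d2 / g0 * (1 - r2) + be - M1) \<le> lpx d1 d2"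
proof -
  obtain g1 r1 M1 where G1: "cD g1" "\<And>x. x \<in> {L1..L2} \<Longrightarrow> g1 x > 0" "r1 < 1"
    "\<And>x. x \<in> {L1..L2} \<Longrightarrow> Aop J1 L1 L2 g1 x \<le> r1 * g1 x" "\<And>x. 1 \<le> g1 x" "\<And>x. g1 x \<le> M1"
    by (rule k1.leak) blast
  obtain g2 r2 M2 where G2: "cD g2" "\<And>x. x \<in> {L1..L2} \<Longrightarrow> g2 x > 0" "r2 < 1"
    "\<And>x. x \<in> {L1..L2} \<Longrightarrow> Aop J2 L1 L2 g2 x \<le> r2 * g2 x" "\<And>x. 1 \<le> g2 x" "\<And>x. g2 x \<le> M2"
    by (rule k2.leak) blast
  show ?thesis
  proof (rule that[OF G1(3) G2(3)])
    fix d1 d2 :: real assume d: "d1 \<ge> 0" "d2 \<ge> 0"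
    define lam where "lam = min (d1 / e * (1 - r1) + al - M2) (d2 / g0 * (1 - r2) + be - M1)"
    have c: "d1 / e \<ge> 0" "d2 / g0 \<ge> 0" using d e g0 by auto
    have "mem d1 d2 lam" unfolding mem_def2
    proof (intro exI conjI ballI)
      show "cD g1" "cD g2" by (rule G1(1), rule G2(1))
      fix x assume x: "x \<in> {L1..L2}"
      show "0 < g1 x" "0 < g2 x" using G1(2) G2(2) x by auto
      have "d1 / e * Aop J1 L1 L2 g1 x \<le> d1 / e * (r1 * g1 x)" using c G1(4)[OF x] by (intro mult_left_mono) auto
      moreover have "g2 x \<le> M2 * g1 x" using G2(6)[of x] G1(5)[of x] G2(5)[of x]
        by (metis mult_left_mono mult.right_neutral order_trans zero_le_one)
      moreover have "(d1 / e * r1 + M2) * g1 x \<le> (d1 / e + al - lam) * g1 x"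
      proof -
        have lm: "lam \<le> d1 / e * (1 - r1) + al - M2" unfolding lam_def by simp
        have "d1 / e * (1 - r1) = d1 / e - d1 / e * r1" by (simp add: right_diff_distrib)
        then have "d1 / e * r1 + M2 \<le> d1 / e + al - lam" using lm by linarith
        then show ?thesis using G1(5)[of x] by (intro mult_right_mono) auto
      qed
      ultimately show "d1 / e * Aop J1 L1 L2 g1 x + g2 x \<le> (d1 / e + al - lam) * g1 x"
        by (simp add: algebra_simps)
      have "d2 / g0 * Aop J2 L1 L2 g2 x \<le> d2 / g0 * (r2 * g2 x)" using c G2(4)[OF x] by (intro mult_left_mono) auto
      moreover have "g1 x \<le> M1 * g2 x" using G1(6)[of x] G2(5)[of x] G1(5)[of x]
        by (metis mult_left_mono mult.right_neutral order_trans zero_le_one)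
      moreover have "(d2 / g0 * r2 + M1) * g2 x \<le> (d2 / g0 + be - lam) * g2 x"
      proof -
        have lm: "lam \<le> d2 / g0 * (1 - r2) + be - M1" unfolding lam_def by simp
        have "d2 / g0 * (1 - r2) = d2 / g0 - d2 / g0 * r2" by (simp add: right_diff_distrib)
        then have "d2 / g0 * r2 + M1 \<le> d2 / g0 + be - lam" using lm by linarith
        then show ?thesis using G2(5)[of x] by (intro mult_right_mono) auto
      qed
      ultimately show "d2 / g0 * Aop J2 L1 L2 g2 x + g1 x \<le> (d2 / g0 + be - lam) * g2 x"
        by (simp add: algebra_simps)
    qed
    then show "lam \<le> lpx d1 d2" unfolding lpx_def using bdd[OF d] by (intro cSup_upper) auto
  qed
qed

lemma lp_loc_lip: assumes d: "d1 > 0" "d2 > 0"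
  obtains L where "L \<ge> 0" "\<And>d1' d2'. d1' \<ge> d1 / 2 \<Longrightarrow> d2' \<ge> d2 / 2 \<Longrightarrow>
     \<bar>lpx d1' d2' - lpx d1 d2\<bar> \<le> L * (\<bar>d1' - d1\<bar> + \<bar>d2' - d2\<bar>)"
proof -
  define l0 where "l0 = lam0 - 1"
  define Kb1 where "Kb1 = max 1 (\<bar>al - l0\<bar> / (d1 / e / 2))"
  define Kb2 where "Kb2 = max 1 (\<bar>be - l0\<bar> / (d2 / g0 / 2))"
  have Kb: "Kb1 \<ge> 0" "Kb2 \<ge> 0" unfolding Kb1_def Kb2_def by auto
  have K1le: "max 1 ((al - l0) / (c / e)) \<le> Kb1" if "c \<ge> d1 / 2" for c
  proof -
    have cpos: "c / e > 0" using that d e by auto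
    have "(al - l0) / (c / e) \<le> \<bar>al - l0\<bar> / (c / e)" using cpos by (intro divide_right_mono) auto
    also have "\<dots> \<le> \<bar>al - l0\<bar> / (d1 / e / 2)" using that d e cpos
      by (intro divide_left_mono) (auto simp: field_simps)
    finally show ?thesis unfolding Kb1_def by auto
  qed
  have K2le: "max 1 ((be - l0) / (c / g0)) \<le> Kb2" if "c \<ge> d2 / 2" for c
  proof -
    have cpos: "c / g0 > 0" using that d g0 by auto
    have "(be - l0) / (c / g0) \<le> \<bar>be - l0\<bar> / (c / g0)" using cpos by (intro divide_right_mono) auto
    also have "\<dots> \<le> \<bar>be - l0\<bar> / (d2 / g0 / 2)" using that d g0 cpos
      by (intro divide_left_mono) (auto simp: field_simps)
    finally show ?thesis unfolding Kb2_def by auto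
  qed
  define L where "L = Kb1 / e + Kb2 / g0"
  show ?thesis
  proof (rule that[of L])
    show "L \<ge> 0" unfolding L_def using Kb e g0 by auto
    fix d1' d2' assume d': "d1' \<ge> d1 / 2" "d2' \<ge> d2 / 2"
    have d'p: "d1' > 0" "d2' > 0" using d d' by auto
    have a1: "\<bar>d1 / e - d1' / e\<bar> = \<bar>d1' - d1\<bar> / e" "\<bar>d1' / e - d1 / e\<bar> = \<bar>d1' - d1\<bar> / e"
      using e by (simp_all add: abs_minus_commute diff_divide_distrib[symmetric])
    have a2: "\<bar>d2 / g0 - d2' / g0\<bar> = \<bar>d2' - d2\<bar> / g0" "\<bar>d2' / g0 - d2 / g0\<bar> = \<bar>d2' - d2\<bar> / g0"
      using g0 by (simp_all add: abs_minus_commute diff_divide_distrib[symmetric])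
    have b1: "\<bar>d1' - d1\<bar> / e * max 1 ((al - l0) / (c / e)) \<le> \<bar>d1' - d1\<bar> * (Kb1 / e)" if "c \<ge> d1 / 2" for c
    proof -
      have "\<bar>d1' - d1\<bar> / e * max 1 ((al - l0) / (c / e)) \<le> \<bar>d1' - d1\<bar> / e * Kb1"
        using K1le[OF that] e by (intro mult_left_mono) auto
      then show ?thesis by simp
    qed
    have b2: "\<bar>d2' - d2\<bar> / g0 * max 1 ((be - l0) / (c / g0)) \<le> \<bar>d2' - d2\<bar> * (Kb2 / g0)" if "c \<ge> d2 / 2" for c
    proof -
      have "\<bar>d2' - d2\<bar> / g0 * max 1 ((be - l0) / (c / g0)) \<le> \<bar>d2' - d2\<bar> / g0 * Kb2"
        using K2le[OF that] g0 by (intro mult_left_mono) auto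
      then show ?thesis by simp
    qed
    have i1: "lpx d1' d2' - (\<bar>d1 / e - d1' / e\<bar> * max 1 ((al - l0) / (d1' / e)) + \<bar>d2 / g0 - d2' / g0\<bar> * max 1 ((be - l0) / (d2' / g0))) \<le> lpx d1 d2"
      unfolding l0_def using lp_lip[OF d'p] d by auto
    have i2: "lpx d1 d2 - (\<bar>d1' / e - d1 / e\<bar> * max 1 ((al - l0) / (d1 / e)) + \<bar>d2' / g0 - d2 / g0\<bar> * max 1 ((be - l0) / (d2 / g0))) \<le> lpx d1' d2'"
      unfolding l0_def using lp_lip[OF d] d'p by auto
    have m: "\<bar>d1' - d1\<bar> * (Kb1 / e) + \<bar>d2' - d2\<bar> * (Kb2 / g0) \<le> L * (\<bar>d1' - d1\<bar> + \<bar>d2' - d2\<bar>)"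
    proof -
      have "\<bar>d1' - d1\<bar> * (Kb1 / e) \<le> \<bar>d1' - d1\<bar> * L" unfolding L_def using Kb g0 by (intro mult_left_mono) auto
      moreover have "\<bar>d2' - d2\<bar> * (Kb2 / g0) \<le> \<bar>d2' - d2\<bar> * L" unfolding L_def using Kb e by (intro mult_left_mono) auto
      ultimately show ?thesis by (simp add: algebra_simps)
    qed
    have "d1 \<ge> d1 / 2" "d2 \<ge> d2 / 2" using d by auto
    then show "\<bar>lpx d1' d2' - lpx d1 d2\<bar> \<le> L * (\<bar>d1' - d1\<bar> + \<bar>d2' - d2\<bar>)"
      using i1 i2 b1[OF d'(1)] b2[OF d'(2)] b1[of d1] b2[of d2] m unfolding a1 a2 by (simp add: abs_le_iff)
  qed
qed

end
theorem proposition2p13: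
  fixes J1 J2 G Gd :: "real \<Rightarrow> real" and a b e L1 L2 :: real
  assumes "kernel_J J1" and "kernel_J J2"
    and "a > 0" and "b > 0" and "e > 0"
    and "cond_G1 G Gd"
    and "0 < L1" and "L1 < L2"
  defines "lp \<equiv> \<lambda>d1 d2. lambda_p J1 J2 a b e (Gd 0) L1 L2 d1 d2"
  shows "continuous_on ({0<..} \<times> {0<..}) (\<lambda>(d1, d2). lp d1 d2)
    \<and> (\<forall>d1 d2 d1' d2'. 0 < d1' \<and> 0 < d2' \<and> d1' < d1 \<and> d2' < d2
           \<longrightarrow> lp d1 d2 > lp d1' d2')
    \<and> ((\<lambda>(d1, d2). lp d1 d2) \<longlongrightarrow>
           (a / e + b / Gd 0 - sqrt ((a / e - b / Gd 0)\<^sup>2 + 4)) / 2)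
           (at (0, 0) within ({0<..} \<times> {0<..}))
    \<and> filterlim (\<lambda>(d1, d2). lp d1 d2) at_top (at_top \<times>\<^sub>F at_top)"
proof -
  have g0: "Gd 0 > 0" using assms(6) unfolding cond_G1_def by auto
  have ms: "mainset J1 J2 L1 L2 a b e (Gd 0)"
    unfolding mainset_def mainset_axioms_def kern_def using assms g0 by auto
  interpret M: mainset J1 J2 L1 L2 a b e "Gd 0" by (rule ms)
  have eq: "lp d1 d2 = M.lpx d1 d2" for d1 d2 unfolding lp_def M.lp_eq ..
  have eqf: "(\<lambda>(d1, d2). lp d1 d2) = (\<lambda>(d1, d2). M.lpx d1 d2)" unfolding eq ..
  have cont: "continuous_on ({0<..} \<times> {0<..}) (\<lambda>(d1, d2). M.lpx d1 d2)"
    unfolding continuous_on_iff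
  proof (intro ballI allI impI)
    fix x :: "real \<times> real" and \<epsilon> :: real assume x: "x \<in> {0<..} \<times> {0<..}" and \<epsilon>: "\<epsilon> > 0"
    obtain d1 d2 where xd: "x = (d1, d2)" by (cases x)
    have d: "d1 > 0" "d2 > 0" using x xd by auto
    obtain L where L: "L \<ge> 0" "\<And>d1' d2'. d1' \<ge> d1 / 2 \<Longrightarrow> d2' \<ge> d2 / 2 \<Longrightarrow>
       \<bar>M.lpx d1' d2' - M.lpx d1 d2\<bar> \<le> L * (\<bar>d1' - d1\<bar> + \<bar>d2' - d2\<bar>)"
      by (rule M.lp_loc_lip[OF d]) blast
    define \<delta> where "\<delta> = min (min (d1 / 2) (d2 / 2)) (\<epsilon> / (2 * (L + 1)))"
    have \<delta>: "\<delta> > 0" unfolding \<delta>_def using d \<epsilon> L by auto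
    show "\<exists>\<delta>>0. \<forall>x'\<in>{0<..} \<times> {0<..}. dist x' x < \<delta> \<longrightarrow>
       dist ((\<lambda>(d1, d2). M.lpx d1 d2) x') ((\<lambda>(d1, d2). M.lpx d1 d2) x) < \<epsilon>"
    proof (intro exI conjI ballI impI)
      show "\<delta> > 0" by (rule \<delta>)
      fix x' :: "real \<times> real" assume "x' \<in> {0<..} \<times> {0<..}" and dx: "dist x' x < \<delta>"
      obtain d1' d2' where x'd: "x' = (d1', d2')" by (cases x')
      have t1: "\<bar>d1' - d1\<bar> < \<delta>" using dist_fst_le[of x' x] dx by (simp add: xd x'd dist_real_def)
      have t2: "\<bar>d2' - d2\<bar> < \<delta>" using dist_snd_le[of x' x] dx by (simp add: xd x'd dist_real_def)
      have u: "\<bar>d1' - d1\<bar> * 2 < d1" "\<bar>d2' - d2\<bar> * 2 < d2" using t1 t2 unfolding \<delta>_def by auto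
      have v: "d1 - d1' \<le> \<bar>d1' - d1\<bar>" "d2 - d2' \<le> \<bar>d2' - d2\<bar>" by auto
      have la: "\<And>y d d' :: real. y * 2 < d \<Longrightarrow> d - d' \<le> y \<Longrightarrow> d \<le> d' * 2" by linarith
      have "d1 \<le> d1' * 2" using la[OF u(1) v(1)] .
      moreover have "d2 \<le> d2' * 2" using la[OF u(2) v(2)] .
      ultimately have "d1' \<ge> d1 / 2" "d2' \<ge> d2 / 2" by auto
      then have "\<bar>M.lpx d1' d2' - M.lpx d1 d2\<bar> \<le> L * (\<bar>d1' - d1\<bar> + \<bar>d2' - d2\<bar>)" by (rule L(2))
      also have "\<dots> \<le> L * (2 * (\<epsilon> / (2 * (L + 1))))"
        using t1 t2 L(1) unfolding \<delta>_def by (intro mult_left_mono) auto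
      also have "\<dots> = \<epsilon> * (L / (L + 1))" using L(1) by (simp add: field_simps)
      also have "\<dots> < \<epsilon> * 1" using L(1) \<epsilon> by (intro mult_strict_left_mono) auto
      finally show "dist ((\<lambda>(d1, d2). M.lpx d1 d2) x') ((\<lambda>(d1, d2). M.lpx d1 d2) x) < \<epsilon>"
        by (simp add: xd x'd dist_real_def)
    qed
  qed
  have mono: "\<forall>d1 d2 d1' d2'. 0 < d1' \<and> 0 < d2' \<and> d1' < d1 \<and> d2' < d2 \<longrightarrow> lp d1 d2 > lp d1' d2'"
    unfolding eq using M.lp_strict by blast
  have lim: "((\<lambda>(d1, d2). M.lpx d1 d2) \<longlongrightarrow> M.lam0) (at (0, 0) within ({0<..} \<times> {0<..}))"
    unfolding Lim_within
  proof (intro allI impI)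
    fix \<epsilon> :: real assume \<epsilon>: "\<epsilon> > 0"
    define C where "C = 1 / e + 1 / Gd 0 + 1"
    have p: "0 < 1 / e" "0 < 1 / Gd 0" using assms(5) g0 by simp_all
    have C: "C > 0" unfolding C_def using p by linarith
    show "\<exists>d>0. \<forall>x\<in>{0<..} \<times> {0<..}. 0 < dist x (0, 0) \<and> dist x (0, 0) < d \<longrightarrow>
       dist ((\<lambda>(d1, d2). M.lpx d1 d2) x) M.lam0 < \<epsilon>"
    proof (intro exI conjI ballI impI)
      show "\<epsilon> / C > 0" using \<epsilon> C by simp
      fix x :: "real \<times> real" assume x: "x \<in> {0<..} \<times> {0<..}" and dx: "0 < dist x (0, 0) \<and> dist x (0, 0) < \<epsilon> / C"
      obtain d1 d2 where xd: "x = (d1, d2)" by (cases x)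
      have d: "d1 > 0" "d2 > 0" using x xd by auto
      have t1: "d1 < \<epsilon> / C" using dist_fst_le[of x "(0,0)"] dx d by (simp add: xd dist_real_def)
      have t2: "d2 < \<epsilon> / C" using dist_snd_le[of x "(0,0)"] dx d by (simp add: xd dist_real_def)
      have b: "M.lam0 \<le> M.lpx d1 d2" "M.lpx d1 d2 \<le> M.lam0 + max (d1 / e) (d2 / Gd 0)"
        using M.lp_bounds[of d1 d2] d by auto
      have "d1 / e \<le> d1 * C" unfolding C_def using d assms g0 by (simp add: field_simps)
      moreover have "d2 / Gd 0 \<le> d2 * C" unfolding C_def using d assms g0 by (simp add: field_simps)
      moreover have "d1 * C < \<epsilon>" "d2 * C < \<epsilon>" using t1 t2 C by (simp_all add: field_simps)
      ultimately have m: "max (d1 / e) (d2 / Gd 0) < \<epsilon>" by auto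
      have "M.lpx d1 d2 - M.lam0 < \<epsilon>" using b(2) m by linarith
      moreover have "0 \<le> M.lpx d1 d2 - M.lam0" using b(1) by linarith
      ultimately show "dist ((\<lambda>(d1, d2). M.lpx d1 d2) x) M.lam0 < \<epsilon>" by (simp add: xd dist_real_def)
    qed
  qed
  have lam0: "M.lam0 = (a / e + b / Gd 0 - sqrt ((a / e - b / Gd 0)\<^sup>2 + 4)) / 2"
    unfolding M.lam0_def M.al_def M.be_def ..
  have top: "filterlim (\<lambda>(d1, d2). M.lpx d1 d2) at_top (at_top \<times>\<^sub>F at_top)"
  proof -
    obtain r1 r2 M1 M2 where R: "r1 < 1" "r2 < 1" "\<And>d1 d2. d1 \<ge> 0 \<Longrightarrow> d2 \<ge> 0 \<Longrightarrow>
       min (d1 / e * (1 - r1) + M.al - M2) (d2 / Gd 0 * (1 - r2) + M.be - M1) \<le> M.lpx d1 d2"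
      by (rule M.lp_top) blast
    show ?thesis unfolding filterlim_at_top
    proof
      fix Z :: real
      define X1 where "X1 = max 0 (e * (Z - M.al + M2) / (1 - r1))"
      define X2 where "X2 = max 0 (Gd 0 * (Z - M.be + M1) / (1 - r2))"
      have h1: "Z \<le> d1 / e * (1 - r1) + M.al - M2" if "d1 \<ge> X1" for d1
      proof -
        have "e * (Z - M.al + M2) / (1 - r1) \<le> d1" using that unfolding X1_def by auto
        then have "e * (Z - M.al + M2) \<le> d1 * (1 - r1)" using R(1) by (simp add: field_simps)
        then have "Z - M.al + M2 \<le> d1 * (1 - r1) / e" using assms(5) by (simp add: field_simps)
        then show ?thesis by (simp add: field_simps)
      qed
      have h2: "Z \<le> d2 / Gd 0 * (1 - r2) + M.be - M1" if "d2 \<ge> X2" for d2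
      proof -
        have "Gd 0 * (Z - M.be + M1) / (1 - r2) \<le> d2" using that unfolding X2_def by auto
        then have "Gd 0 * (Z - M.be + M1) \<le> d2 * (1 - r2)" using R(2) by (simp add: field_simps)
        then have "Z - M.be + M1 \<le> d2 * (1 - r2) / Gd 0" using g0 by (simp add: field_simps)
        then show ?thesis by (simp add: field_simps)
      qed
      show "\<forall>\<^sub>F x in at_top \<times>\<^sub>F at_top. Z \<le> (\<lambda>(d1, d2). M.lpx d1 d2) x"
        unfolding eventually_prod_filter
      proof (intro exI conjI allI impI)
        show "eventually (\<lambda>d1. X1 \<le> d1) at_top" by (rule eventually_ge_at_top)
        show "eventually (\<lambda>d2. X2 \<le> d2) at_top" by (rule eventually_ge_at_top)
        fix d1 d2 :: real assume "X1 \<le> d1" "X2 \<le> d2"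
        moreover have "d1 \<ge> 0" "d2 \<ge> 0" using calculation unfolding X1_def X2_def by auto
        ultimately have "Z \<le> d1 / e * (1 - r1) + M.al - M2" "Z \<le> d2 / Gd 0 * (1 - r2) + M.be - M1"
          "min (d1 / e * (1 - r1) + M.al - M2) (d2 / Gd 0 * (1 - r2) + M.be - M1) \<le> M.lpx d1 d2"
          using h1 h2 R(3)[of d1 d2] by auto
        then show "Z \<le> (\<lambda>(d1, d2). M.lpx d1 d2) (d1, d2)" by (simp add: min_le_iff_disj) linarith
      qed
    qed
  qed
  show ?thesis unfolding eqf using cont mono lim top lam0 by simp
qed


end
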